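(* For a semigroup $X$ the following conditions are equivalent: (1) $\upsilon(X)$ is a finite semilattice; (2) $\upsilon(X)$ is an inverse semigroup; (3) the idempotents of the semigroup $\upsilon(X)$ commute, and $\upsilon(X)$ is sub-Clifford or regular; (4) $X$ is a finite linear semilattice, isomorphic to $L_n$ for some $n\in\omega$.
   Context: An upfamily on a set $X$ is a family $\mathcal F$ of nonempty subsets of $X$ such that $F\in\mathcal F$ and $F\subset E\subset X$ imply $E\in\mathcal F$; $\upsilon(X)$ is the set of all upfamilies on $X$. Each $x\in X$ is identified with $\langle x\rangle=\{A\subset X: x\in A\}$. For a family $\mathcal C$ of nonempty subsets, $\langle\mathcal C\rangle=\{A\subset X:\exists C\in\mathcal C,\ C\subset A\}$. For a semigroup $(X,* )$ the operation is extended to $\upsilon(X)$ by $\mathcal A*\mathcal B=\big\langle \bigcup_{a\in A} a*B_a : A\in\mathcal A,\ \{B_a\}_{a\in A}\subset\mathcal B\big\rangle$. A semilattice is a set with an associative, commutative, idempotent operation; a semigroup is linear if $xy\in\{x,y\}$ for all $x,y$. A semigroup $S$ is inverse if each $x$ has a unique $x^{-1}$ with $xx^{-1}x=x$, $x^{-1}xx^{-1}=x^{-1}$; regular if $x\in xSx$ for all $x$; sub-Clifford if it is a union of cancellative subsemigroups. $L_n=\{0,\dots,n-1\}$ with the operation $\min$ ($L_0=\emptyset$). *)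

theory Defs
  imports Main
begin

definition semigroup_on :: "'a set \<Rightarrow> ('a \<Rightarrow> 'a \<Rightarrow> 'a) \<Rightarrow> bool" where
  "semigroup_on S f \<longleftrightarrow> (\<forall>x\<in>S. \<forall>y\<in>S. f x y \<in> S) \<and>
     (\<forall>x\<in>S. \<forall>y\<in>S. \<forall>z\<in>S. f (f x y) z = f x (f y z))"

definition upfamily :: "'a set \<Rightarrow> 'a set set \<Rightarrow> bool" where
  "upfamily X F \<longleftrightarrow> F \<subseteq> Pow X \<and> {} \<notin> F \<and>
     (\<forall>A\<in>F. \<forall>E. A \<subseteq> E \<and> E \<subseteq> X \<longrightarrow> E \<in> F)"

definition upsilon :: "'a set \<Rightarrow> 'a set set set" where
  "upsilon X = {F. upfamily X F}"

definition up_gen :: "'a set \<Rightarrow> 'a set set \<Rightarrow> 'a set set" where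
  "up_gen X C = {E. E \<subseteq> X \<and> (\<exists>D\<in>C. D \<subseteq> E)}"

definition up_mult :: "'a set \<Rightarrow> ('a \<Rightarrow> 'a \<Rightarrow> 'a) \<Rightarrow> 'a set set \<Rightarrow> 'a set set \<Rightarrow> 'a set set" where
  "up_mult X m \<A> \<B> = up_gen X
     {(\<Union>a\<in>A. m a ` (Bs a)) | A Bs. A \<in> \<A> \<and> (\<forall>a\<in>A. Bs a \<in> \<B>)}"

definition semilattice_on :: "'a set \<Rightarrow> ('a \<Rightarrow> 'a \<Rightarrow> 'a) \<Rightarrow> bool" where
  "semilattice_on S f \<longleftrightarrow> semigroup_on S f \<and>
     (\<forall>x\<in>S. \<forall>y\<in>S. f x y = f y x) \<and> (\<forall>x\<in>S. f x x = x)"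

definition linear_on :: "'a set \<Rightarrow> ('a \<Rightarrow> 'a \<Rightarrow> 'a) \<Rightarrow> bool" where
  "linear_on S f \<longleftrightarrow> (\<forall>x\<in>S. \<forall>y\<in>S. f x y \<in> {x, y})"

definition inverse_semigroup_on :: "'a set \<Rightarrow> ('a \<Rightarrow> 'a \<Rightarrow> 'a) \<Rightarrow> bool" where
  "inverse_semigroup_on S f \<longleftrightarrow> semigroup_on S f \<and>
     (\<forall>x\<in>S. \<exists>!y. y \<in> S \<and> f (f x y) x = x \<and> f (f y x) y = y)"

definition regular_on :: "'a set \<Rightarrow> ('a \<Rightarrow> 'a \<Rightarrow> 'a) \<Rightarrow> bool" where
  "regular_on S f \<longleftrightarrow> (\<forall>x\<in>S. \<exists>s\<in>S. f (f x s) x = x)"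

definition cancellative_on :: "'a set \<Rightarrow> ('a \<Rightarrow> 'a \<Rightarrow> 'a) \<Rightarrow> bool" where
  "cancellative_on T f \<longleftrightarrow> (\<forall>a\<in>T. \<forall>b\<in>T. \<forall>c\<in>T.
     (f a b = f a c \<longrightarrow> b = c) \<and> (f b a = f c a \<longrightarrow> b = c))"

definition sub_clifford_on :: "'a set \<Rightarrow> ('a \<Rightarrow> 'a \<Rightarrow> 'a) \<Rightarrow> bool" where
  "sub_clifford_on S f \<longleftrightarrow> (\<forall>x\<in>S. \<exists>T. T \<subseteq> S \<and> x \<in> T \<and>
     (\<forall>a\<in>T. \<forall>b\<in>T. f a b \<in> T) \<and> cancellative_on T f)"

definition idempotents_commute_on :: "'a set \<Rightarrow> ('a \<Rightarrow> 'a \<Rightarrow> 'a) \<Rightarrow> bool" where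
  "idempotents_commute_on S f \<longleftrightarrow> (\<forall>e\<in>S. \<forall>e'\<in>S.
     f e e = e \<and> f e' e' = e' \<longrightarrow> f e e' = f e' e)"

definition iso_to_L :: "'a set \<Rightarrow> ('a \<Rightarrow> 'a \<Rightarrow> 'a) \<Rightarrow> nat \<Rightarrow> bool" where
  "iso_to_L S f n \<longleftrightarrow> (\<exists>h. bij_betw h S {..<n} \<and>
     (\<forall>x\<in>S. \<forall>y\<in>S. h (f x y) = min (h x) (h y)))"

end

theory Submission
  imports Defs
begin

lemma ups_D: "F \<in> upsilon X \<Longrightarrow> F \<subseteq> Pow X \<and> {} \<notin> F \<and> (\<forall>A\<in>F. \<forall>E. A \<subseteq> E \<and> E \<subseteq> X \<longrightarrow> E \<in> F)"
  by (simp add: upsilon_def upfamily_def)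

lemma ups_I: "F \<subseteq> Pow X \<Longrightarrow> {} \<notin> F \<Longrightarrow> (\<And>A E. A \<in> F \<Longrightarrow> A \<subseteq> E \<Longrightarrow> E \<subseteq> X \<Longrightarrow> E \<in> F) \<Longrightarrow> F \<in> upsilon X"
  by (auto simp add: upsilon_def upfamily_def)

lemma ups_up: "F \<in> upsilon X \<Longrightarrow> A \<in> F \<Longrightarrow> A \<subseteq> E \<Longrightarrow> E \<subseteq> X \<Longrightarrow> E \<in> F"
  using ups_D by blast

lemma ups_sub: "F \<in> upsilon X \<Longrightarrow> A \<in> F \<Longrightarrow> A \<subseteq> X"
  using ups_D by blast

lemma ups_ne: "F \<in> upsilon X \<Longrightarrow> A \<in> F \<Longrightarrow> A \<noteq> {}"
  using ups_D by blast

lemma up_mult_char: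
  assumes A: "\<A> \<in> upsilon X" and B: "\<B> \<in> upsilon X"
  shows "C \<in> up_mult X m \<A> \<B> \<longleftrightarrow> C \<subseteq> X \<and> {a\<in>X. {b\<in>X. m a b \<in> C} \<in> \<B>} \<in> \<A>"
proof
  assume "C \<in> up_mult X m \<A> \<B>"
  then obtain A0 Bs where CX: "C \<subseteq> X" and A0: "A0 \<in> \<A>" and Bs: "\<forall>a\<in>A0. Bs a \<in> \<B>"
    and sub: "(\<Union>a\<in>A0. m a ` (Bs a)) \<subseteq> C"
    unfolding up_mult_def up_gen_def by blast
  have "A0 \<subseteq> {a\<in>X. {b\<in>X. m a b \<in> C} \<in> \<B>}"
  proof
    fix a assume a: "a \<in> A0"
    have aX: "a \<in> X" using ups_sub[OF A A0] a by blast
    have "Bs a \<subseteq> {b\<in>X. m a b \<in> C}" using sub a ups_sub[OF B] Bs by blast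
    then have "{b\<in>X. m a b \<in> C} \<in> \<B>" using ups_up[OF B] Bs a by blast
    then show "a \<in> {a\<in>X. {b\<in>X. m a b \<in> C} \<in> \<B>}" using aX by blast
  qed
  then have "{a\<in>X. {b\<in>X. m a b \<in> C} \<in> \<B>} \<in> \<A>" using ups_up[OF A A0] by blast
  then show "C \<subseteq> X \<and> {a\<in>X. {b\<in>X. m a b \<in> C} \<in> \<B>} \<in> \<A>" using CX by blast
next
  assume H: "C \<subseteq> X \<and> {a\<in>X. {b\<in>X. m a b \<in> C} \<in> \<B>} \<in> \<A>"
  define A0 where "A0 = {a\<in>X. {b\<in>X. m a b \<in> C} \<in> \<B>}"
  define Bs where "Bs = (\<lambda>a. {b\<in>X. m a b \<in> C})"
  have "A0 \<in> \<A> \<and> (\<forall>a\<in>A0. Bs a \<in> \<B>)" using H unfolding A0_def Bs_def by auto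
  moreover have "(\<Union>a\<in>A0. m a ` (Bs a)) \<subseteq> C" unfolding Bs_def by auto
  ultimately show "C \<in> up_mult X m \<A> \<B>" using H unfolding up_mult_def up_gen_def by blast
qed

lemma up_mult_closed:
  assumes A: "\<A> \<in> upsilon X" and B: "\<B> \<in> upsilon X"
  shows "up_mult X m \<A> \<B> \<in> upsilon X"
proof (rule ups_I)
  show "up_mult X m \<A> \<B> \<subseteq> Pow X"
  proof
    fix C assume "C \<in> up_mult X m \<A> \<B>"
    then have "C \<subseteq> X" using up_mult_char[OF A B] by simp
    then show "C \<in> Pow X" by simp
  qed
  have e: "{a\<in>X. {b\<in>X. m a b \<in> {}} \<in> \<B>} = {}" using ups_ne[OF B] by blast
  show "{} \<notin> up_mult X m \<A> \<B>"
  proof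
    assume "{} \<in> up_mult X m \<A> \<B>"
    then have "{a\<in>X. {b\<in>X. m a b \<in> {}} \<in> \<B>} \<in> \<A>" using up_mult_char[OF A B] by simp
    then have "{} \<in> \<A>" by (simp only: e)
    then show False using ups_ne[OF A] by blast
  qed
  fix C E assume C: "C \<in> up_mult X m \<A> \<B>" and CE: "C \<subseteq> E" and EX: "E \<subseteq> X"
  have sub: "{a\<in>X. {b\<in>X. m a b \<in> C} \<in> \<B>} \<subseteq> {a\<in>X. {b\<in>X. m a b \<in> E} \<in> \<B>}"
  proof
    fix a assume a: "a \<in> {a\<in>X. {b\<in>X. m a b \<in> C} \<in> \<B>}"
    have "{b\<in>X. m a b \<in> C} \<subseteq> {b\<in>X. m a b \<in> E}" using CE by blast
    then have "{b\<in>X. m a b \<in> E} \<in> \<B>" using ups_up[OF B, of "{b\<in>X. m a b \<in> C}" "{b\<in>X. m a b \<in> E}"] a by blast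
    then show "a \<in> {a\<in>X. {b\<in>X. m a b \<in> E} \<in> \<B>}" using a by blast
  qed
  have "{a\<in>X. {b\<in>X. m a b \<in> C} \<in> \<B>} \<in> \<A>" using C up_mult_char[OF A B] by simp
  then have "{a\<in>X. {b\<in>X. m a b \<in> E} \<in> \<B>} \<in> \<A>" using ups_up[OF A] sub by blast
  then show "E \<in> up_mult X m \<A> \<B>" using up_mult_char[OF A B] EX by simp
qed

lemma up_mult_assoc:
  assumes S: "semigroup_on X m" and A: "\<A> \<in> upsilon X" and B: "\<B> \<in> upsilon X" and CC: "\<C> \<in> upsilon X"
  shows "up_mult X m (up_mult X m \<A> \<B>) \<C> = up_mult X m \<A> (up_mult X m \<B> \<C>)"
proof -
  have cl: "\<And>x y. x \<in> X \<Longrightarrow> y \<in> X \<Longrightarrow> m x y \<in> X" and as: "\<And>x y z. x \<in> X \<Longrightarrow> y \<in> X \<Longrightarrow> z \<in> X \<Longrightarrow> m (m x y) z = m x (m y z)"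
    using S unfolding semigroup_on_def by auto
  have AB: "up_mult X m \<A> \<B> \<in> upsilon X" and BC: "up_mult X m \<B> \<C> \<in> upsilon X"
    using up_mult_closed A B CC by auto
  show ?thesis
  proof (rule set_eqI)
    fix D
    have e1: "\<And>a. a \<in> X \<Longrightarrow> {b\<in>X. m a b \<in> {u\<in>X. {c\<in>X. m u c \<in> D} \<in> \<C>}} = {b\<in>X. {c\<in>X. m (m a b) c \<in> D} \<in> \<C>}"
      using cl by auto
    have e2: "\<And>a b. a \<in> X \<Longrightarrow> b \<in> X \<Longrightarrow> {c\<in>X. m b c \<in> {b\<in>X. m a b \<in> D}} = {c\<in>X. m (m a b) c \<in> D}"
      using cl as by auto
    have "D \<in> up_mult X m (up_mult X m \<A> \<B>) \<C> \<longleftrightarrow> D \<subseteq> X \<and> {a\<in>X. {b\<in>X. {c\<in>X. m (m a b) c \<in> D} \<in> \<C>} \<in> \<B>} \<in> \<A>"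
    proof -
      have "{a\<in>X. {b\<in>X. m a b \<in> {u\<in>X. {c\<in>X. m u c \<in> D} \<in> \<C>}} \<in> \<B>}
          = {a\<in>X. {b\<in>X. {c\<in>X. m (m a b) c \<in> D} \<in> \<C>} \<in> \<B>}"
      proof (rule Collect_cong)
        fix a show "(a \<in> X \<and> {b\<in>X. m a b \<in> {u\<in>X. {c\<in>X. m u c \<in> D} \<in> \<C>}} \<in> \<B>) =
            (a \<in> X \<and> {b\<in>X. {c\<in>X. m (m a b) c \<in> D} \<in> \<C>} \<in> \<B>)"
          using e1[of a] by auto
      qed
      moreover have "{u\<in>X. {c\<in>X. m u c \<in> D} \<in> \<C>} \<in> up_mult X m \<A> \<B> \<longleftrightarrow>
          {a\<in>X. {b\<in>X. m a b \<in> {u\<in>X. {c\<in>X. m u c \<in> D} \<in> \<C>}} \<in> \<B>} \<in> \<A>"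
        using up_mult_char[OF A B, of "{u\<in>X. {c\<in>X. m u c \<in> D} \<in> \<C>}" m] by blast
      ultimately show ?thesis unfolding up_mult_char[OF AB CC] by simp
    qed
    moreover have "D \<in> up_mult X m \<A> (up_mult X m \<B> \<C>) \<longleftrightarrow> D \<subseteq> X \<and> {a\<in>X. {b\<in>X. {c\<in>X. m (m a b) c \<in> D} \<in> \<C>} \<in> \<B>} \<in> \<A>"
    proof -
      have "\<And>a. a \<in> X \<Longrightarrow> ({b\<in>X. m a b \<in> D} \<in> up_mult X m \<B> \<C>) = ({b\<in>X. {c\<in>X. m (m a b) c \<in> D} \<in> \<C>} \<in> \<B>)"
      proof -
        fix a assume aX: "a \<in> X"
        have "{b\<in>X. {c\<in>X. m b c \<in> {b\<in>X. m a b \<in> D}} \<in> \<C>} = {b\<in>X. {c\<in>X. m (m a b) c \<in> D} \<in> \<C>}"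
        proof (rule Collect_cong)
          fix b show "(b \<in> X \<and> {c\<in>X. m b c \<in> {b\<in>X. m a b \<in> D}} \<in> \<C>) = (b \<in> X \<and> {c\<in>X. m (m a b) c \<in> D} \<in> \<C>)"
            using e2[OF aX, of b] by auto
        qed
        then show "({b\<in>X. m a b \<in> D} \<in> up_mult X m \<B> \<C>) = ({b\<in>X. {c\<in>X. m (m a b) c \<in> D} \<in> \<C>} \<in> \<B>)"
          unfolding up_mult_char[OF B CC] by simp
      qed
      then have "{a\<in>X. {b\<in>X. m a b \<in> D} \<in> up_mult X m \<B> \<C>} = {a\<in>X. {b\<in>X. {c\<in>X. m (m a b) c \<in> D} \<in> \<C>} \<in> \<B>}"
        by auto
      then show ?thesis unfolding up_mult_char[OF A BC] by simp
    qed
    ultimately show "D \<in> up_mult X m (up_mult X m \<A> \<B>) \<C> \<longleftrightarrow> D \<in> up_mult X m \<A> (up_mult X m \<B> \<C>)" by simp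
  qed
qed

lemma ups_semigroup: "semigroup_on X m \<Longrightarrow> semigroup_on (upsilon X) (up_mult X m)"
  unfolding semigroup_on_def[of "upsilon X"] using up_mult_closed up_mult_assoc by blast

lemma sl_inverse:
  assumes "semilattice_on S f" shows "inverse_semigroup_on S f"
proof -
  have cl: "\<And>x y. x \<in> S \<Longrightarrow> y \<in> S \<Longrightarrow> f x y \<in> S" and
    as: "\<And>x y z. x \<in> S \<Longrightarrow> y \<in> S \<Longrightarrow> z \<in> S \<Longrightarrow> f (f x y) z = f x (f y z)" and
    cm: "\<And>x y. x \<in> S \<Longrightarrow> y \<in> S \<Longrightarrow> f x y = f y x" and
    id: "\<And>x. x \<in> S \<Longrightarrow> f x x = x"
    using assms unfolding semilattice_on_def semigroup_on_def by auto
  show ?thesis unfolding inverse_semigroup_on_def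
  proof (intro conjI ballI)
    show "semigroup_on S f" using assms unfolding semilattice_on_def by auto
    fix x assume x: "x \<in> S"
    show "\<exists>!y. y \<in> S \<and> f (f x y) x = x \<and> f (f y x) y = y"
    proof (rule ex1I[of _ x])
      show "x \<in> S \<and> f (f x x) x = x \<and> f (f x x) x = x" using x id by simp
      fix y assume y: "y \<in> S \<and> f (f x y) x = x \<and> f (f y x) y = y"
      then have yS: "y \<in> S" by blast
      have "f (f x y) x = f x y" using as[OF x yS x] cm[OF yS x] as[OF x x yS] id[OF x] by simp
      then have 1: "f x y = x" using y by simp
      have "f (f y x) y = f y x" using as[OF yS x yS] cm[OF x yS] as[OF yS yS x] id[OF yS] by simp
      then have 2: "f y x = y" using y by simp
      show "y = x" using 1 2 cm[OF x yS] by simp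
    qed
  qed
qed

lemma inverse_regular: "inverse_semigroup_on S f \<Longrightarrow> regular_on S f"
  unfolding inverse_semigroup_on_def regular_on_def by blast

lemma inverse_IC:
  assumes I: "inverse_semigroup_on S f" shows "idempotents_commute_on S f"
proof -
  have cl: "\<And>x y. x \<in> S \<Longrightarrow> y \<in> S \<Longrightarrow> f x y \<in> S" and
    as: "\<And>x y z. x \<in> S \<Longrightarrow> y \<in> S \<Longrightarrow> z \<in> S \<Longrightarrow> f (f x y) z = f x (f y z)"
    using I unfolding inverse_semigroup_on_def semigroup_on_def by auto
  have uq: "\<And>x y z. x \<in> S \<Longrightarrow> y \<in> S \<Longrightarrow> z \<in> S \<Longrightarrow> f (f x y) x = x \<Longrightarrow> f (f y x) y = y
     \<Longrightarrow> f (f x z) x = x \<Longrightarrow> f (f z x) z = z \<Longrightarrow> y = z"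
    using I unfolding inverse_semigroup_on_def by metis
  have ex: "\<And>x. x \<in> S \<Longrightarrow> \<exists>y\<in>S. f (f x y) x = x \<and> f (f y x) y = y"
    using I unfolding inverse_semigroup_on_def by metis
  have idem_prod: "f e g \<in> S \<and> f (f e g) (f e g) = f e g"
    if e: "e \<in> S" "f e e = e" and g: "g \<in> S" "f g g = g" for e g
  proof -
    define x where "x = f e g"
    have xS: "x \<in> S" using cl e g x_def by simp
    obtain a where a: "a \<in> S" "f (f x a) x = x" "f (f a x) a = a" using ex[OF xS] by blast
    define b where "b = f g (f a e)"
    have bS: "b \<in> S" using cl a e g b_def by simp
    have a1: "f x (f a x) = x" using a as xS by simp
    have a2: "f a (f x a) = a" using a as xS by simp
    have "f (f x b) x = f e (f g (f g (f a (f e (f e g)))))"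
      unfolding x_def b_def using as cl e g a by simp
    also have "\<dots> = f e (f g (f a (f e g)))"
    proof -
      have "f g (f g (f a (f e (f e g)))) = f g (f a (f e g))"
        using as cl e g a by (metis)
      then show ?thesis by simp
    qed
    also have "\<dots> = f x (f a x)" unfolding x_def using as cl e g a by simp
    finally have b1: "f (f x b) x = x" using a1 by simp
    have "f (f b x) b = f g (f a (f e (f e (f g (f g (f a e))))))"
      unfolding x_def b_def using as cl e g a by simp
    also have "\<dots> = f g (f a (f e (f g (f a e))))"
    proof -
      have "f e (f e (f g (f g (f a e)))) = f e (f g (f a e))"
        using as cl e g a by metis
      then show ?thesis by simp
    qed
    also have "\<dots> = f g (f (f a (f x a)) e)" unfolding x_def using as cl e g a by simp
    also have "\<dots> = b" using a2 b_def by simp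
    finally have b2: "f (f b x) b = b" .
    have ab: "a = b" using uq[OF xS a(1) bS a(2) a(3) b1 b2] .
    have "f a a = f b b" using ab by simp
    also have "\<dots> = f g (f (f a (f x a)) e)" unfolding b_def x_def using as cl e g a by simp
    also have "\<dots> = b" using a2 b_def by simp
    finally have aa: "f a a = a" using ab by simp
    have aaa1: "f (f a a) a = a" using aa by simp
    have xa1: "f (f a x) a = a" using a(3) .
    have xa2: "f (f x a) x = x" using a(2) .
    have "x = a" using uq[OF a(1) xS a(1) xa1 xa2 aaa1 aaa1] .
    then show ?thesis using aa xS x_def by simp
  qed
  show ?thesis unfolding idempotents_commute_on_def
  proof (intro ballI impI)
    fix e g assume e: "e \<in> S" and g: "g \<in> S" and eg: "f e e = e \<and> f g g = g"
    have x: "f e g \<in> S" "f (f e g) (f e g) = f e g" using idem_prod e g eg by auto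
    have y: "f g e \<in> S" "f (f g e) (f g e) = f g e" using idem_prod e g eg by auto
    have r1: "f (f (f e g) (f g e)) (f e g) = f e g"
    proof -
      have "f (f (f e g) (f g e)) (f e g) = f (f e g) (f e g)"
        using as cl e g eg by (simp, metis)
      then show ?thesis using x by simp
    qed
    have r2: "f (f (f g e) (f e g)) (f g e) = f g e"
    proof -
      have "f (f (f g e) (f e g)) (f g e) = f (f g e) (f g e)"
        using as cl e g eg by (simp, metis)
      then show ?thesis using y by simp
    qed
    have s1: "f (f (f e g) (f e g)) (f e g) = f e g" using x by simp
    show "f e g = f g e" using uq[OF x(1) x(1) y(1) s1 s1 r1 r2] .
  qed
qed

definition filt :: "'a set \<Rightarrow> 'a set \<Rightarrow> 'a set set" where "filt X A = {C. C \<subseteq> X \<and> A \<subseteq> C}"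
definition hit :: "'a set \<Rightarrow> 'a set \<Rightarrow> 'a set set" where "hit X A = {C. C \<subseteq> X \<and> C \<inter> A \<noteq> {}}"
definition m2 :: "('a \<Rightarrow> 'a \<Rightarrow> 'a) \<Rightarrow> 'a set \<Rightarrow> 'a set \<Rightarrow> 'a set" where
  "m2 m A B = {m a b | a b. a \<in> A \<and> b \<in> B}"

lemma filt_ups: "A \<subseteq> X \<Longrightarrow> A \<noteq> {} \<Longrightarrow> filt X A \<in> upsilon X"
  by (rule ups_I) (auto simp: filt_def)

lemma hit_ups: "A \<subseteq> X \<Longrightarrow> A \<noteq> {} \<Longrightarrow> hit X A \<in> upsilon X"
  by (rule ups_I) (auto simp: hit_def)

lemma filt_inj: "A \<subseteq> X \<Longrightarrow> B \<subseteq> X \<Longrightarrow> filt X A = filt X B \<Longrightarrow> A = B"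
  unfolding filt_def by blast

lemma filt_iff: "C \<in> filt X A \<longleftrightarrow> C \<subseteq> X \<and> A \<subseteq> C" unfolding filt_def by blast
lemma hit_iff: "C \<in> hit X A \<longleftrightarrow> C \<subseteq> X \<and> C \<inter> A \<noteq> {}" unfolding hit_def by blast

lemma filt_mem: "A \<subseteq> X \<Longrightarrow> {x\<in>X. P x} \<in> filt X A \<longleftrightarrow> (\<forall>a\<in>A. P a)"
  unfolding filt_def by blast

lemma hit_mem: "A \<subseteq> X \<Longrightarrow> {x\<in>X. P x} \<in> hit X A \<longleftrightarrow> (\<exists>a\<in>A. P a)"
  unfolding hit_def by blast

lemma ff_mem: assumes "A \<subseteq> X" "A \<noteq> {}" "B \<subseteq> X" "B \<noteq> {}"
  shows "C \<in> up_mult X m (filt X A) (filt X B) \<longleftrightarrow> C \<subseteq> X \<and> (\<forall>a\<in>A. \<forall>b\<in>B. m a b \<in> C)"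
  unfolding up_mult_char[OF filt_ups[OF assms(1,2)] filt_ups[OF assms(3,4)]]
    filt_mem[OF assms(1)] filt_mem[OF assms(3)] by (rule refl)

lemma fh_mem: assumes "A \<subseteq> X" "A \<noteq> {}" "B \<subseteq> X" "B \<noteq> {}"
  shows "C \<in> up_mult X m (filt X A) (hit X B) \<longleftrightarrow> C \<subseteq> X \<and> (\<forall>a\<in>A. \<exists>b\<in>B. m a b \<in> C)"
  unfolding up_mult_char[OF filt_ups[OF assms(1,2)] hit_ups[OF assms(3,4)]]
    filt_mem[OF assms(1)] hit_mem[OF assms(3)] by (rule refl)

lemma hf_mem: assumes "A \<subseteq> X" "A \<noteq> {}" "B \<subseteq> X" "B \<noteq> {}"
  shows "C \<in> up_mult X m (hit X A) (filt X B) \<longleftrightarrow> C \<subseteq> X \<and> (\<exists>a\<in>A. \<forall>b\<in>B. m a b \<in> C)"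
  unfolding up_mult_char[OF hit_ups[OF assms(1,2)] filt_ups[OF assms(3,4)]]
    hit_mem[OF assms(1)] filt_mem[OF assms(3)] by (rule refl)

lemma hh_mem: assumes "A \<subseteq> X" "A \<noteq> {}" "B \<subseteq> X" "B \<noteq> {}"
  shows "C \<in> up_mult X m (hit X A) (hit X B) \<longleftrightarrow> C \<subseteq> X \<and> (\<exists>a\<in>A. \<exists>b\<in>B. m a b \<in> C)"
  unfolding up_mult_char[OF hit_ups[OF assms(1,2)] hit_ups[OF assms(3,4)]]
    hit_mem[OF assms(1)] hit_mem[OF assms(3)] by (rule refl)

lemma filt_mult: assumes "A \<subseteq> X" "A \<noteq> {}" "B \<subseteq> X" "B \<noteq> {}" and cl: "\<And>x y. x \<in> X \<Longrightarrow> y \<in> X \<Longrightarrow> m x y \<in> X"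
  shows "up_mult X m (filt X A) (filt X B) = filt X (m2 m A B)"
proof (rule set_eqI)
  fix C
  have "m2 m A B \<subseteq> C \<longleftrightarrow> (\<forall>a\<in>A. \<forall>b\<in>B. m a b \<in> C)" unfolding m2_def by blast
  then show "C \<in> up_mult X m (filt X A) (filt X B) \<longleftrightarrow> C \<in> filt X (m2 m A B)"
    unfolding ff_mem[OF assms(1-4)] filt_iff by blast
qed

lemma filt_idem: assumes "A \<subseteq> X" "A \<noteq> {}" "m2 m A A = A"
  shows "up_mult X m (filt X A) (filt X A) = filt X A"
proof (rule set_eqI)
  fix C
  have "m2 m A A \<subseteq> C \<longleftrightarrow> (\<forall>a\<in>A. \<forall>b\<in>A. m a b \<in> C)" unfolding m2_def by blast
  then show "C \<in> up_mult X m (filt X A) (filt X A) \<longleftrightarrow> C \<in> filt X A"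
    unfolding ff_mem[OF assms(1,2,1,2)] filt_iff using assms(3) by simp
qed

lemma hit_idem: assumes "A \<subseteq> X" "A \<noteq> {}" "m2 m A A = A"
  shows "up_mult X m (hit X A) (hit X A) = hit X A"
proof (rule set_eqI)
  fix C
  have "m2 m A A \<inter> C \<noteq> {} \<longleftrightarrow> (\<exists>a\<in>A. \<exists>b\<in>A. m a b \<in> C)" unfolding m2_def by blast
  then show "C \<in> up_mult X m (hit X A) (hit X A) \<longleftrightarrow> C \<in> hit X A"
    unfolding hh_mem[OF assms(1,2,1,2)] hit_iff using assms(3) by (simp add: Int_commute)
qed

lemma IC_use: assumes "idempotents_commute_on (upsilon X) (up_mult X m)"
  "\<A> \<in> upsilon X" "\<B> \<in> upsilon X" "up_mult X m \<A> \<A> = \<A>" "up_mult X m \<B> \<B> = \<B>"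
  shows "up_mult X m \<A> \<B> = up_mult X m \<B> \<A>"
  using assms unfolding idempotents_commute_on_def by blast

lemma groupG:
  assumes S: "semigroup_on X m" and IC: "idempotents_commute_on (upsilon X) (up_mult X m)"
    and e: "e \<in> X" "m e e = e" and x: "x \<in> X" "m e x = x" "m x e = x"
    and y: "y \<in> X" "m e y = y" "m y e = y" "m x y = e" "m y x = e"
  shows "x = e"
proof -
  have cl: "\<And>x y. x \<in> X \<Longrightarrow> y \<in> X \<Longrightarrow> m x y \<in> X" and
    as: "\<And>x y z. x \<in> X \<Longrightarrow> y \<in> X \<Longrightarrow> z \<in> X \<Longrightarrow> m (m x y) z = m x (m y z)"
    using S unfolding semigroup_on_def by auto
  define A where "A = {u\<in>X. m e u = u \<and> m u e = u \<and> (\<exists>v\<in>X. m e v = v \<and> m v e = v \<and> m u v = e \<and> m v u = e)}"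
  have eA: "e \<in> A" unfolding A_def using e by blast
  have xA: "x \<in> A" unfolding A_def using x y by blast
  have AX: "A \<subseteq> X" unfolding A_def by blast
  have Ane: "A \<noteq> {}" using eA by blast
  have AA: "m2 m A A = A"
  proof
    show "m2 m A A \<subseteq> A"
    proof
      fix w assume "w \<in> m2 m A A"
      then obtain u1 u2 where w: "w = m u1 u2" and u1: "u1 \<in> A" and u2: "u2 \<in> A" unfolding m2_def by blast
      obtain v1 where v1: "v1 \<in> X" "m e v1 = v1" "m v1 e = v1" "m u1 v1 = e" "m v1 u1 = e"
        using u1 unfolding A_def by blast
      obtain v2 where v2: "v2 \<in> X" "m e v2 = v2" "m v2 e = v2" "m u2 v2 = e" "m v2 u2 = e"
        using u2 unfolding A_def by blast
      have u1': "u1 \<in> X" "m e u1 = u1" "m u1 e = u1" using u1 unfolding A_def by auto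
      have u2': "u2 \<in> X" "m e u2 = u2" "m u2 e = u2" using u2 unfolding A_def by auto
      have wX: "w \<in> X" using w cl u1' u2' by simp
      have w1: "m e w = w"
      proof -
        have "m e w = m (m e u1) u2" using w as u1'(1) u2'(1) e(1) by simp
        then show ?thesis using u1'(2) w by simp
      qed
      have w2: "m w e = w"
      proof -
        have "m w e = m u1 (m u2 e)" using w as u1'(1) u2'(1) e(1) by simp
        then show ?thesis using u2'(3) w by simp
      qed
      have vX: "m v2 v1 \<in> X" using cl v1 v2 by simp
      have v1e: "m e (m v2 v1) = m v2 v1"
      proof -
        have "m e (m v2 v1) = m (m e v2) v1" using as v1(1) v2(1) e(1) by simp
        then show ?thesis using v2(2) by simp
      qed
      have v2e: "m (m v2 v1) e = m v2 v1"
      proof -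
        have "m (m v2 v1) e = m v2 (m v1 e)" using as v1(1) v2(1) e(1) by simp
        then show ?thesis using v1(3) by simp
      qed
      have q1: "m u2 (m v2 v1) = v1" using as[of u2 v2 v1] v2 v1 u2' by simp
      have p1: "m w (m v2 v1) = e"
      proof -
        have "m w (m v2 v1) = m u1 (m u2 (m v2 v1))" using w as u1' u2' v1 v2 cl by simp
        then show ?thesis using q1 v1 by simp
      qed
      have q2: "m v1 (m u1 u2) = u2" using as[of v1 u1 u2, symmetric] v1 u1' u2' by simp
      have p2: "m (m v2 v1) w = e"
      proof -
        have "m (m v2 v1) w = m v2 (m v1 (m u1 u2))" using w as u1' u2' v1 v2 cl by simp
        then show ?thesis using q2 v2 by simp
      qed
      show "w \<in> A" unfolding A_def using wX w1 w2 vX v1e v2e p1 p2 by blast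
    qed
    show "A \<subseteq> m2 m A A"
    proof
      fix u assume u: "u \<in> A"
      then have "m u e = u" unfolding A_def by blast
      then show "u \<in> m2 m A A" unfolding m2_def using u eA by force
    qed
  qed
  have FA: "filt X A \<in> upsilon X" and HA: "hit X A \<in> upsilon X" using filt_ups hit_ups AX Ane by auto
  have comm: "up_mult X m (filt X A) (hit X A) = up_mult X m (hit X A) (filt X A)"
    using IC_use[OF IC FA HA filt_idem[OF AX Ane AA] hit_idem[OF AX Ane AA]] .
  have "{e} \<in> up_mult X m (filt X A) (hit X A)"
    unfolding fh_mem[OF AX Ane AX Ane]
  proof (intro conjI ballI)
    show "{e} \<subseteq> X" using e by simp
    fix a assume a: "a \<in> A"
    then obtain v where v: "v \<in> X" "m e v = v" "m v e = v" "m a v = e" "m v a = e" unfolding A_def by blast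
    have "v \<in> A" unfolding A_def using v a unfolding A_def by blast
    then show "\<exists>b\<in>A. m a b \<in> {e}" using v by blast
  qed
  then have "{e} \<in> up_mult X m (hit X A) (filt X A)" using comm by simp
  then obtain a where a: "a \<in> A" "\<forall>b\<in>A. m a b \<in> {e}" unfolding hf_mem[OF AX Ane AX Ane] by blast
  have "m a e = a" using a(1) unfolding A_def by blast
  then have ae: "a = e" using a eA by force
  show "x = e" using a(2) xA ae x by force
qed

lemma sg_absorb:
  assumes S: "semigroup_on X m" and xyz: "x \<in> X" "y \<in> X" "z \<in> X" and h: "m x (m y x) = x"
  shows "m x (m y (m x z)) = m x z"
proof -
  have cl: "\<And>x y. x \<in> X \<Longrightarrow> y \<in> X \<Longrightarrow> m x y \<in> X" and
    as: "\<And>x y z. x \<in> X \<Longrightarrow> y \<in> X \<Longrightarrow> z \<in> X \<Longrightarrow> m (m x y) z = m x (m y z)"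
    using S unfolding semigroup_on_def by auto
  have "m x (m y (m x z)) = m x (m (m y x) z)" by (simp only: as[OF xyz(2,1,3)])
  also have "\<dots> = m (m x (m y x)) z" by (simp only: as[OF xyz(1) cl[OF xyz(2,1)] xyz(3)])
  also have "\<dots> = m x z" by (simp only: h)
  finally show ?thesis .
qed

lemma reg_band:
  assumes S: "semigroup_on X m" and IC: "idempotents_commute_on (upsilon X) (up_mult X m)"
    and R: "\<forall>x\<in>X. \<exists>s\<in>X. m (m x s) x = x"
  shows "\<forall>x\<in>X. m x x = x"
proof
  fix x assume xX: "x \<in> X"
  have cl: "\<And>x y. x \<in> X \<Longrightarrow> y \<in> X \<Longrightarrow> m x y \<in> X" and
    as: "\<And>x y z. x \<in> X \<Longrightarrow> y \<in> X \<Longrightarrow> z \<in> X \<Longrightarrow> m (m x y) z = m x (m y z)"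
    using S unfolding semigroup_on_def by auto
  have XX: "m2 m X X = X"
  proof
    show "m2 m X X \<subseteq> X" unfolding m2_def using cl by blast
    show "X \<subseteq> m2 m X X"
    proof
      fix u assume u: "u \<in> X"
      then obtain s where "s \<in> X" "m (m u s) u = u" using R by blast
      then show "u \<in> m2 m X X" unfolding m2_def using u cl by force
    qed
  qed
  have Xne: "X \<noteq> {}" using xX by blast
  have comm: "m2 m X {e} = m2 m {e} X" if e: "e \<in> X" "m e e = e" for e
  proof -
    have ee: "m2 m {e} {e} = {e}" unfolding m2_def using e by auto
    have eX: "{e} \<subseteq> X" "{e} \<noteq> {}" using e by auto
    have "up_mult X m (filt X X) (filt X {e}) = up_mult X m (filt X {e}) (filt X X)"
      using IC_use[OF IC filt_ups[OF _ Xne] filt_ups[OF eX] filt_idem[OF _ Xne XX] filt_idem[OF eX ee]] by simp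
    then have "filt X (m2 m X {e}) = filt X (m2 m {e} X)"
      using filt_mult[OF _ Xne eX cl] filt_mult[OF eX _ Xne cl] by simp
    moreover have "m2 m X {e} \<subseteq> X" "m2 m {e} X \<subseteq> X" unfolding m2_def using cl e by auto
    ultimately show ?thesis using filt_inj by blast
  qed
  obtain s where s: "s \<in> X" "m (m x s) x = x" using R xX by blast
  have xsx: "m x (m s x) = x" using s as xX by simp
  have xsxz: "\<And>z. z \<in> X \<Longrightarrow> m x (m s (m x z)) = m x z"
  proof -
    fix z assume z: "z \<in> X"
    have "m x (m s (m x z)) = m x (m (m s x) z)" by (simp only: as[OF s(1) xX z])
    also have "\<dots> = m (m x (m s x)) z" by (simp only: as[OF xX cl[OF s(1) xX] z])
    also have "\<dots> = m x z" by (simp only: xsx)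
    finally show "m x (m s (m x z)) = m x z" .
  qed
  define y where "y = m s (m x s)"
  have yX: "y \<in> X" using y_def cl s xX by simp
  have xyx: "m x (m y x) = x" unfolding y_def using as cl s xX xsx by simp
  have yxy: "m y (m x y) = y" unfolding y_def using as cl s xX xsx xsxz by simp
  define e where "e = m x y"
  define f where "f = m y x"
  have eX: "e \<in> X" and fX: "f \<in> X" using e_def f_def cl xX yX by auto
  have ee: "m e e = e" unfolding e_def using as cl xX yX xyx sg_absorb[OF S xX yX yX xyx] by simp
  have ff: "m f f = f" unfolding f_def using as cl xX yX yxy sg_absorb[OF S yX xX xX yxy] by simp
  have "m e x \<in> m2 m {e} X" unfolding m2_def using xX by blast
  moreover have "m e x = x" unfolding e_def using as xX yX xyx by simp
  ultimately have "x \<in> m2 m X {e}" using comm[OF eX ee] by simp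
  then obtain u where u: "u \<in> X" "x = m u e" unfolding m2_def by blast
  have xe: "m x e = x" using u as eX ee by simp
  have "m x f \<in> m2 m X {f}" unfolding m2_def using xX by blast
  moreover have "m x f = x" unfolding f_def using as xX yX xyx by simp
  ultimately have "x \<in> m2 m {f} X" using comm[OF fX ff] by simp
  then obtain v where v: "v \<in> X" "x = m f v" unfolding m2_def by blast
  have fx: "m f x = x"
  proof -
    have "m f x = m (m f f) v" using v as[of f f v] fX by simp
    then show ?thesis using ff v by simp
  qed
  have e1: "e = m f e"
  proof -
    have "e = m (m f x) y" unfolding e_def using fx by simp
    also have "\<dots> = m f e" unfolding e_def using as fX xX yX by simp
    finally show ?thesis .
  qed
  have e2: "f = m f e"
  proof -
    have "f = m y (m x e)" unfolding f_def using xe by simp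
    also have "\<dots> = m f e" unfolding f_def using as eX xX yX by simp
    finally show ?thesis .
  qed
  have ef: "e = f" using e1 e2 by simp
  have "x = e"
  proof (rule groupG[OF S IC eX ee xX _ xe yX])
    show "m e x = x" unfolding e_def using as xX yX xyx by simp
    show "m e y = y" using ef unfolding f_def using as xX yX yxy by simp
    show "m y e = y" unfolding e_def using as xX yX yxy by simp
    show "m x y = e" using e_def by simp
    show "m y x = e" using ef f_def by simp
  qed
  then show "m x x = x" using ee by simp
qed

definition famI :: "'a set \<Rightarrow> (nat \<Rightarrow> 'a) \<Rightarrow> (nat set \<Rightarrow> bool) \<Rightarrow> 'a set set" where
  "famI X s \<Phi> = {C. C \<subseteq> X \<and> \<Phi> {k. s k \<in> C}}"

lemma famI_ups:
  assumes "\<not> \<Phi> {}" "\<And>I J. I \<subseteq> J \<Longrightarrow> \<Phi> I \<Longrightarrow> \<Phi> J"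
  shows "famI X s \<Phi> \<in> upsilon X"
proof (rule ups_I)
  show "famI X s \<Phi> \<subseteq> Pow X" unfolding famI_def by blast
  show "{} \<notin> famI X s \<Phi>" unfolding famI_def using assms(1) by simp
  fix A E assume "A \<in> famI X s \<Phi>" "A \<subseteq> E" "E \<subseteq> X"
  then show "E \<in> famI X s \<Phi>" unfolding famI_def using assms(2)[of "{k. s k \<in> A}" "{k. s k \<in> E}"] by blast
qed

lemma famI_mult:
  assumes sX: "\<And>k. s k \<in> X" and A: "famI X s \<Phi> \<in> upsilon X" and B: "famI X s \<Psi> \<in> upsilon X"
  shows "C \<in> up_mult X m (famI X s \<Phi>) (famI X s \<Psi>) \<longleftrightarrow> C \<subseteq> X \<and> \<Phi> {n. \<Psi> {k. m (s n) (s k) \<in> C}}"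
proof -
  have 1: "\<And>n. {k. s k \<in> {b\<in>X. m (s n) b \<in> C}} = {k. m (s n) (s k) \<in> C}" using sX by auto
  have 2: "{k. s k \<in> {a\<in>X. {b\<in>X. m a b \<in> C} \<in> famI X s \<Psi>}} = {n. \<Psi> {k. m (s n) (s k) \<in> C}}"
    using sX 1 unfolding famI_def by auto
  show ?thesis unfolding up_mult_char[OF A B] using 2 unfolding famI_def[of X s \<Phi>] by auto
qed

lemma even_inf: "infinite {k::nat. even k}"
proof
  assume "finite {k::nat. even k}"
  then obtain M where M: "\<forall>n\<in>{k::nat. even k}. n < M" using finite_nat_set_iff_bounded by blast
  have "2*M \<in> {k::nat. even k}" by simp
  then have "2*M < M" using M by blast
  then show False by simp
qed

lemma odd_inf: "infinite (- {k::nat. even k})"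
proof
  assume "finite (- {k::nat. even k})"
  then obtain M where M: "\<forall>n\<in>- {k::nat. even k}. n < M" using finite_nat_set_iff_bounded by blast
  have "2*M+1 \<in> - {k::nat. even k}" by simp
  then have "2*M+1 < M" using M by blast
  then show False by simp
qed

lemma cofin_inf: "finite (- (J::nat set)) \<Longrightarrow> infinite J"
proof
  assume "finite (- J)" "finite J"
  then have "finite (J \<union> - J)" by simp
  then show False by simp
qed

lemma seq_noIC:
  fixes s :: "nat \<Rightarrow> 'a" and X :: "'a set"
  assumes inj: "inj s" and sX: "\<And>k. s k \<in> X"
  and P: "(\<forall>C n. C \<subseteq> X \<longrightarrow> (finite {k. m (s n) (s k) \<in> C} \<longleftrightarrow> finite {k. s k \<in> C}) \<and>
                (finite (-{k. m (s n) (s k) \<in> C}) \<longleftrightarrow> finite (-{k. s k \<in> C})))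
        \<or> (\<forall>C n. C \<subseteq> X \<longrightarrow> (s n \<in> C \<longrightarrow> finite (-{k. m (s n) (s k) \<in> C})) \<and>
                (s n \<notin> C \<longrightarrow> finite {k. m (s n) (s k) \<in> C}))"
  shows "\<not> idempotents_commute_on (upsilon X) (up_mult X m)"
proof
  assume IC: "idempotents_commute_on (upsilon X) (up_mult X m)"
  define F where "F = famI X s (\<lambda>I. finite (-I))"
  define G where "G = famI X s (\<lambda>I. infinite I)"
  have FU: "F \<in> upsilon X" unfolding F_def
    by (rule famI_ups) (auto intro: finite_subset)
  have GU: "G \<in> upsilon X" unfolding G_def
    by (rule famI_ups) (auto intro: finite_subset)
  have FF: "\<And>C. C \<in> up_mult X m F F \<longleftrightarrow> C \<subseteq> X \<and> finite (- {n. finite (- {k. m (s n) (s k) \<in> C})})"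
    using famI_mult[OF sX FU[unfolded F_def] FU[unfolded F_def]] unfolding F_def by simp
  have GG: "\<And>C. C \<in> up_mult X m G G \<longleftrightarrow> C \<subseteq> X \<and> infinite {n. infinite {k. m (s n) (s k) \<in> C}}"
    using famI_mult[OF sX GU[unfolded G_def] GU[unfolded G_def]] unfolding G_def by simp
  have FG: "\<And>C. C \<in> up_mult X m F G \<longleftrightarrow> C \<subseteq> X \<and> finite (- {n. infinite {k. m (s n) (s k) \<in> C}})"
    using famI_mult[OF sX FU[unfolded F_def] GU[unfolded G_def]] unfolding F_def G_def by simp
  have GF: "\<And>C. C \<in> up_mult X m G F \<longleftrightarrow> C \<subseteq> X \<and> infinite {n. finite (- {k. m (s n) (s k) \<in> C})}"
    using famI_mult[OF sX GU[unfolded G_def] FU[unfolded F_def]] unfolding F_def G_def by simp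
  have Fm: "\<And>C. C \<in> F \<longleftrightarrow> C \<subseteq> X \<and> finite (- {k. s k \<in> C})" unfolding F_def famI_def by simp
  have Gm: "\<And>C. C \<in> G \<longleftrightarrow> C \<subseteq> X \<and> infinite {k. s k \<in> C}" unfolding G_def famI_def by simp
  define C0 where "C0 = s ` {k. even k}"
  have C0X: "C0 \<subseteq> X" unfolding C0_def using sX by blast
  have IC0: "{k. s k \<in> C0} = {k. even k}" unfolding C0_def using inj by (auto simp: inj_eq)
  have inf1: "infinite {k. s k \<in> C0}" using IC0 even_inf by simp
  have inf2: "infinite (- {k. s k \<in> C0})" using IC0 odd_inf by simp
  have infU: "infinite (UNIV :: nat set)" by simp
  from P show False
  proof
    assume P1: "\<forall>C n. C \<subseteq> X \<longrightarrow> (finite {k. m (s n) (s k) \<in> C} \<longleftrightarrow> finite {k. s k \<in> C}) \<and>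
                (finite (-{k. m (s n) (s k) \<in> C}) \<longleftrightarrow> finite (-{k. s k \<in> C}))"
    have e1: "\<And>C. C \<subseteq> X \<Longrightarrow> {n. infinite {k. m (s n) (s k) \<in> C}} = (if infinite {k. s k \<in> C} then UNIV else {})"
      using P1 by auto
    have e2: "\<And>C. C \<subseteq> X \<Longrightarrow> {n. finite (-{k. m (s n) (s k) \<in> C})} = (if finite (-{k. s k \<in> C}) then UNIV else {})"
      using P1 by auto
    have "up_mult X m F F = F"
    proof (rule set_eqI)
      fix C show "C \<in> up_mult X m F F \<longleftrightarrow> C \<in> F" unfolding FF Fm using e2 infU by (auto split: if_splits)
    qed
    moreover have "up_mult X m G G = G"
    proof (rule set_eqI)
      fix C show "C \<in> up_mult X m G G \<longleftrightarrow> C \<in> G" unfolding GG Gm using e1 infU by (auto split: if_splits)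
    qed
    ultimately have "up_mult X m F G = up_mult X m G F" using IC_use[OF IC FU GU] by blast
    moreover have "C0 \<in> up_mult X m F G" unfolding FG using e1[OF C0X] C0X inf1 by simp
    moreover have "C0 \<notin> up_mult X m G F" unfolding GF using e2[OF C0X] inf2 by simp
    ultimately show False by simp
  next
    assume P2: "\<forall>C n. C \<subseteq> X \<longrightarrow> (s n \<in> C \<longrightarrow> finite (-{k. m (s n) (s k) \<in> C})) \<and>
                (s n \<notin> C \<longrightarrow> finite {k. m (s n) (s k) \<in> C})"
    have e1: "\<And>C. C \<subseteq> X \<Longrightarrow> {n. infinite {k. m (s n) (s k) \<in> C}} = {k. s k \<in> C}"
    proof -
      fix C assume CX: "C \<subseteq> X"
      show "{n. infinite {k. m (s n) (s k) \<in> C}} = {k. s k \<in> C}"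
      proof (rule set_eqI, rule iffI)
        fix n assume "n \<in> {n. infinite {k. m (s n) (s k) \<in> C}}"
        then show "n \<in> {k. s k \<in> C}" using P2 CX by auto
      next
        fix n assume "n \<in> {k. s k \<in> C}"
        then have "finite (-{k. m (s n) (s k) \<in> C})" using P2 CX by auto
        then show "n \<in> {n. infinite {k. m (s n) (s k) \<in> C}}" using cofin_inf by blast
      qed
    qed
    have e2: "\<And>C. C \<subseteq> X \<Longrightarrow> {n. finite (-{k. m (s n) (s k) \<in> C})} = {k. s k \<in> C}"
    proof -
      fix C assume CX: "C \<subseteq> X"
      show "{n. finite (-{k. m (s n) (s k) \<in> C})} = {k. s k \<in> C}"
      proof (rule set_eqI, rule iffI)
        fix n assume "n \<in> {n. finite (-{k. m (s n) (s k) \<in> C})}"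
        then have f: "finite (-{k. m (s n) (s k) \<in> C})" by simp
        show "n \<in> {k. s k \<in> C}"
        proof (rule ccontr)
          assume "n \<notin> {k. s k \<in> C}"
          then have "finite {k. m (s n) (s k) \<in> C}" using P2 CX by auto
          then show False using f cofin_inf by blast
        qed
      next
        fix n assume "n \<in> {k. s k \<in> C}"
        then show "n \<in> {n. finite (-{k. m (s n) (s k) \<in> C})}" using P2 CX by auto
      qed
    qed
    have "up_mult X m F F = F"
    proof (rule set_eqI)
      fix C show "C \<in> up_mult X m F F \<longleftrightarrow> C \<in> F" unfolding FF Fm using e2 by auto
    qed
    moreover have "up_mult X m G G = G"
    proof (rule set_eqI)
      fix C show "C \<in> up_mult X m G G \<longleftrightarrow> C \<in> G" unfolding GG Gm using e1 by auto
    qed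
    ultimately have "up_mult X m F G = up_mult X m G F" using IC_use[OF IC FU GU] by blast
    moreover have "C0 \<notin> up_mult X m F G" unfolding FG using e1[OF C0X] inf2 by simp
    moreover have "C0 \<in> up_mult X m G F" unfolding GF using e2[OF C0X] C0X inf1 by simp
    ultimately show False by simp
  qed
qed

primrec pw :: "('a \<Rightarrow> 'a \<Rightarrow> 'a) \<Rightarrow> 'a \<Rightarrow> nat \<Rightarrow> 'a" where
  "pw m x 0 = x" | "pw m x (Suc n) = m x (pw m x n)"

lemma pw_X: "semigroup_on X m \<Longrightarrow> x \<in> X \<Longrightarrow> pw m x n \<in> X"
  by (induction n) (auto simp: semigroup_on_def)

lemma pw_mult: assumes S: "semigroup_on X m" and x: "x \<in> X"
  shows "m (pw m x i) (pw m x j) = pw m x (Suc (i + j))"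
proof (induction i)
  case 0 then show ?case by simp
next
  case (Suc i)
  have "m (pw m x (Suc i)) (pw m x j) = m x (m (pw m x i) (pw m x j))"
    using S x pw_X[OF S x] unfolding semigroup_on_def by simp
  then show ?case using Suc by simp
qed

lemma shift_fin1: "finite {k. c + k \<in> I} \<longleftrightarrow> finite (I::nat set)"
proof
  assume f: "finite {k. c + k \<in> I}"
  have "I \<subseteq> (\<lambda>k. c + k) ` {k. c + k \<in> I} \<union> {..<c}"
  proof
    fix i assume i: "i \<in> I"
    show "i \<in> (\<lambda>k. c + k) ` {k. c + k \<in> I} \<union> {..<c}"
    proof (cases "i < c")
      case True then show ?thesis by simp
    next
      case False
      then have "i = c + (i - c)" by simp
      then have "i \<in> (\<lambda>k. c + k) ` {k. c + k \<in> I}" using i by (intro image_eqI[of _ _ "i - c"]) auto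
      then show ?thesis by blast
    qed
  qed
  moreover have "finite ((\<lambda>k. c + k) ` {k. c + k \<in> I} \<union> {..<c})" using f by simp
  ultimately show "finite I" by (rule finite_subset)
next
  assume "finite I"
  then have "finite ((\<lambda>k. c + k) -` I)" by (rule finite_vimageI) (simp add: inj_on_def)
  then show "finite {k. c + k \<in> I}" by (simp add: vimage_def)
qed

lemma shift_fin: "(finite {k. c + k \<in> I} \<longleftrightarrow> finite (I::nat set)) \<and> (finite (-{k. c + k \<in> I}) \<longleftrightarrow> finite (-I))"
proof -
  have "-{k. c + k \<in> I} = {k. c + k \<in> -I}" by auto
  then show ?thesis using shift_fin1[of c I] shift_fin1[of c "-I"] by simp
qed

lemma evq_fin:
  assumes "\<forall>k\<ge>n. (k \<in> J) = (k \<in> (I::nat set))"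
  shows "(finite J \<longleftrightarrow> finite I) \<and> (finite (-J) \<longleftrightarrow> finite (-I))"
proof -
  have A': "\<forall>k. k \<notin> {..<n} \<longrightarrow> (k \<in> J) = (k \<in> I)" using assms by (simp add: not_less)
  have 1: "J \<subseteq> I \<union> {..<n}" "I \<subseteq> J \<union> {..<n}" "-J \<subseteq> -I \<union> {..<n}" "-I \<subseteq> -J \<union> {..<n}"
    using A' by blast+
  have "finite J \<Longrightarrow> finite I" using finite_subset[OF 1(2)] by simp
  moreover have "finite I \<Longrightarrow> finite J" using finite_subset[OF 1(1)] by simp
  moreover have "finite (-J) \<Longrightarrow> finite (-I)" using finite_subset[OF 1(4)] by simp
  moreover have "finite (-I) \<Longrightarrow> finite (-J)" using finite_subset[OF 1(3)] by simp
  ultimately show ?thesis by blast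
qed

lemma sc_regular:
  assumes S: "semigroup_on X m" and IC: "idempotents_commute_on (upsilon X) (up_mult X m)"
    and SC: "sub_clifford_on (upsilon X) (up_mult X m)"
  shows "\<forall>x\<in>X. \<exists>s\<in>X. m (m x s) x = x"
proof
  fix x assume x: "x \<in> X"
  have cl: "\<And>x y. x \<in> X \<Longrightarrow> y \<in> X \<Longrightarrow> m x y \<in> X"
    using S unfolding semigroup_on_def by auto
  let ?s = "pw m x"
  have sX: "\<And>k. ?s k \<in> X" using pw_X[OF S x] .
  have ninj: "\<not> inj ?s"
  proof
    assume inj: "inj ?s"
    have P1: "\<forall>C n. C \<subseteq> X \<longrightarrow> (finite {k. m (?s n) (?s k) \<in> C} \<longleftrightarrow> finite {k. ?s k \<in> C}) \<and>
                (finite (-{k. m (?s n) (?s k) \<in> C}) \<longleftrightarrow> finite (-{k. ?s k \<in> C}))"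
    proof (intro allI impI)
      fix C n
      have "{k. m (?s n) (?s k) \<in> C} = {k. Suc n + k \<in> {k. ?s k \<in> C}}"
        using pw_mult[OF S x] by simp
      then show "(finite {k. m (?s n) (?s k) \<in> C} \<longleftrightarrow> finite {k. ?s k \<in> C}) \<and>
                (finite (-{k. m (?s n) (?s k) \<in> C}) \<longleftrightarrow> finite (-{k. ?s k \<in> C}))"
        using shift_fin[of "Suc n" "{k. ?s k \<in> C}"] by simp
    qed
    have "\<not> idempotents_commute_on (upsilon X) (up_mult X m)"
      by (rule seq_noIC[OF inj sX]) (rule disjI1[OF P1])
    then show False using IC by contradiction
  qed
  then obtain a b where ab: "a \<noteq> b" "?s a = ?s b" unfolding inj_def by blast
  obtain i j where ij: "i < j" "?s i = ?s j"
  proof (cases "a < b")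
    case True then show ?thesis using that ab by blast
  next
    case False then have "b < a" using ab by simp
    then show ?thesis using that ab by metis
  qed
  have xX1: "{x} \<subseteq> X" "{x} \<noteq> {}" using x by auto
  have "\<forall>z\<in>upsilon X. \<exists>T. T \<subseteq> upsilon X \<and> z \<in> T \<and> (\<forall>a\<in>T. \<forall>b\<in>T. up_mult X m a b \<in> T) \<and> cancellative_on T (up_mult X m)"
    using SC unfolding sub_clifford_on_def .
  from bspec[OF this filt_ups[OF xX1]]
  obtain T where T: "T \<subseteq> upsilon X" "filt X {x} \<in> T" "\<forall>a\<in>T. \<forall>b\<in>T. up_mult X m a b \<in> T"
    "cancellative_on T (up_mult X m)" by (elim exE conjE) (intro that)
  have fS: "\<And>k. filt X {?s (Suc k)} = up_mult X m (filt X {x}) (filt X {?s k})"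
  proof -
    fix k
    have "m2 m {x} {?s k} = {?s (Suc k)}" unfolding m2_def by simp
    moreover have "{?s k} \<subseteq> X" "{?s k} \<noteq> {}" using sX by auto
    ultimately show "filt X {?s (Suc k)} = up_mult X m (filt X {x}) (filt X {?s k})"
      using filt_mult[OF xX1 _ _ cl, of "{?s k}"] by simp
  qed
  have fT: "\<And>k. filt X {?s k} \<in> T"
  proof -
    fix k show "filt X {?s k} \<in> T"
      by (induction k) (use T fS in auto)
  qed
  have canc: "\<And>i j. i < j \<Longrightarrow> ?s i = ?s j \<Longrightarrow> ?s 0 = ?s (j - i)"
  proof -
    fix i
    show "\<And>j. i < j \<Longrightarrow> ?s i = ?s j \<Longrightarrow> ?s 0 = ?s (j - i)"
    proof (induction i)
      case 0 then show ?case by simp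
    next
      case (Suc i j)
      then obtain j' where j: "j = Suc j'" by (cases j) auto
      have "filt X {?s (Suc i)} = filt X {?s (Suc j')}" using Suc.prems j by simp
      then have "up_mult X m (filt X {x}) (filt X {?s i}) = up_mult X m (filt X {x}) (filt X {?s j'})"
        using fS by simp
      moreover have "\<And>b c. b \<in> T \<Longrightarrow> c \<in> T \<Longrightarrow> up_mult X m (filt X {x}) b = up_mult X m (filt X {x}) c \<Longrightarrow> b = c"
        using T(4) T(2) unfolding cancellative_on_def by blast
      ultimately have "filt X {?s i} = filt X {?s j'}" using fT by blast
      then have "{?s i} = {?s j'}" using filt_inj[of "{?s i}" X "{?s j'}"] sX by blast
      then have "?s i = ?s j'" by simp
      moreover have "i < j'" using Suc.prems j by simp
      ultimately have "?s 0 = ?s (j' - i)" using Suc.IH by blast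
      then show ?case using j by simp
    qed
  qed
  define d where "d = j - i"
  have d0: "d \<noteq> 0" using ij d_def by simp
  have sd: "?s d = x" using canc[OF ij] d_def by simp
  have per: "\<And>t. ?s (d + t) = ?s t"
  proof -
    fix t show "?s (d + t) = ?s t"
      by (induction t) (use sd in auto)
  qed
  obtain e where e: "d = Suc e" using d0 by (cases d) auto
  have "m (m x (?s (e + e))) x = m (?s (Suc (e + e))) (?s 0)" by simp
  also have "\<dots> = ?s (Suc (Suc (e + e) + 0))" using pw_mult[OF S x] by blast
  also have "\<dots> = ?s (d + d)" using e by simp
  also have "\<dots> = x" using per[of d] sd by simp
  finally show "\<exists>s\<in>X. m (m x s) x = x" using sX by blast
qed

lemma m2I: "a \<in> A \<Longrightarrow> b \<in> B \<Longrightarrow> m a b \<in> m2 m A B"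
  unfolding m2_def by blast

lemma reg_from_ups:
  assumes R: "regular_on (upsilon X) (up_mult X m)"
  shows "\<forall>x\<in>X. \<exists>s\<in>X. m (m x s) x = x"
proof
  fix x assume x: "x \<in> X"
  have x1: "{x} \<subseteq> X" "{x} \<noteq> {}" using x by auto
  let ?F = "filt X {x}"
  have FU: "?F \<in> upsilon X" using filt_ups[OF x1] .
  obtain \<S> where S: "\<S> \<in> upsilon X" "up_mult X m (up_mult X m ?F \<S>) ?F = ?F"
    using R FU unfolding regular_on_def by blast
  have FS: "up_mult X m ?F \<S> \<in> upsilon X" using up_mult_closed[OF FU S(1)] .
  have "{x} \<in> ?F" unfolding filt_iff using x by simp
  then have "{x} \<in> up_mult X m (up_mult X m ?F \<S>) ?F" using S(2) by simp
  then have "{u\<in>X. {b\<in>X. m u b \<in> {x}} \<in> ?F} \<in> up_mult X m ?F \<S>"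
    using up_mult_char[OF FS FU] by blast
  moreover have "{u\<in>X. {b\<in>X. m u b \<in> {x}} \<in> ?F} = {u\<in>X. m u x = x}"
    using filt_mem[OF x1(1)] by simp
  ultimately have "{u\<in>X. m u x = x} \<in> up_mult X m ?F \<S>" by simp
  then have "{a\<in>X. {s\<in>X. m a s \<in> {u\<in>X. m u x = x}} \<in> \<S>} \<in> ?F"
    using up_mult_char[OF FU S(1)] by blast
  then have "{s\<in>X. m x s \<in> {u\<in>X. m u x = x}} \<in> \<S>"
    using filt_mem[OF x1(1), of "\<lambda>a. {s\<in>X. m a s \<in> {u\<in>X. m u x = x}} \<in> \<S>"] by simp
  then have "{s\<in>X. m x s \<in> {u\<in>X. m u x = x}} \<noteq> {}" using ups_ne[OF S(1)] by blast
  then show "\<exists>s\<in>X. m (m x s) x = x" by blast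
qed

lemma band_comm:
  assumes S: "semigroup_on X m" and IC: "idempotents_commute_on (upsilon X) (up_mult X m)"
    and B: "\<forall>x\<in>X. m x x = x"
  shows "\<forall>x\<in>X. \<forall>y\<in>X. m x y = m y x"
proof (intro ballI)
  fix x y assume x: "x \<in> X" and y: "y \<in> X"
  have cl: "\<And>x y. x \<in> X \<Longrightarrow> y \<in> X \<Longrightarrow> m x y \<in> X" using S unfolding semigroup_on_def by auto
  have x1: "{x} \<subseteq> X" "{x} \<noteq> {}" and y1: "{y} \<subseteq> X" "{y} \<noteq> {}" using x y by auto
  have xx: "m2 m {x} {x} = {x}" and yy: "m2 m {y} {y} = {y}" unfolding m2_def using B x y by auto
  have "up_mult X m (filt X {x}) (filt X {y}) = up_mult X m (filt X {y}) (filt X {x})"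
    using IC_use[OF IC filt_ups[OF x1] filt_ups[OF y1] filt_idem[OF x1 xx] filt_idem[OF y1 yy]] .
  then have "filt X (m2 m {x} {y}) = filt X (m2 m {y} {x})"
    using filt_mult[OF x1 y1 cl] filt_mult[OF y1 x1 cl] by simp
  moreover have "m2 m {x} {y} = {m x y}" "m2 m {y} {x} = {m y x}" unfolding m2_def by auto
  ultimately have "filt X {m x y} = filt X {m y x}" by simp
  then have "{m x y} = {m y x}" using filt_inj[of "{m x y}" X "{m y x}"] cl x y by simp
  then show "m x y = m y x" by simp
qed

lemma sl_linear:
  assumes S: "semigroup_on X m" and SR: "sub_clifford_on (upsilon X) (up_mult X m) \<or> regular_on (upsilon X) (up_mult X m)"
    and B: "\<forall>x\<in>X. m x x = x" and CM: "\<forall>x\<in>X. \<forall>y\<in>X. m x y = m y x"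
  shows "linear_on X m"
  unfolding linear_on_def
proof (intro ballI)
  fix x y assume x: "x \<in> X" and y: "y \<in> X"
  have cl: "\<And>x y. x \<in> X \<Longrightarrow> y \<in> X \<Longrightarrow> m x y \<in> X" and
    as: "\<And>x y z. x \<in> X \<Longrightarrow> y \<in> X \<Longrightarrow> z \<in> X \<Longrightarrow> m (m x y) z = m x (m y z)"
    using S unfolding semigroup_on_def by auto
  define z where "z = m x y"
  have zX: "z \<in> X" using z_def cl x y by simp
  have xz: "m x z = z" unfolding z_def using as[OF x x y] B x by simp
  have yz: "m y z = z" unfolding z_def using as[OF y y x] B y CM x y by simp
  let ?A = "{x, y}"
  have A1: "?A \<subseteq> X" "?A \<noteq> {}" using x y by auto
  have xx: "m x x = x" and yy: "m y y = y" using B x y by auto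
  have i1: "x \<in> m2 m ?A B'" if "x \<in> B'" for B' using m2I[of x ?A x B' m] that xx by simp
  have i2: "y \<in> m2 m ?A B'" if "y \<in> B'" for B' using m2I[of y ?A y B' m] that yy by simp
  have i3: "z \<in> m2 m ?A B'" if "y \<in> B'" for B' using m2I[of x ?A y B' m] that z_def by simp
  have AA: "m2 m ?A ?A = {x, y, z}"
  proof
    show "m2 m ?A ?A \<subseteq> {x, y, z}" unfolding m2_def using xx yy CM x y z_def by auto
    show "{x, y, z} \<subseteq> m2 m ?A ?A" using i1 i2 i3 by simp
  qed
  have AAA: "m2 m ?A {x, y, z} = {x, y, z}"
  proof
    show "m2 m ?A {x, y, z} \<subseteq> {x, y, z}" unfolding m2_def using xx yy CM x y z_def xz yz by auto
    show "{x, y, z} \<subseteq> m2 m ?A {x, y, z}" using i1 i2 i3 by simp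
  qed
  have A3: "{x, y, z} \<subseteq> X" "{x, y, z} \<noteq> {}" using x y zX by auto
  have FA: "filt X ?A \<in> upsilon X" using filt_ups[OF A1] .
  from SR show "m x y \<in> {x, y}"
  proof
    assume SC: "sub_clifford_on (upsilon X) (up_mult X m)"
    have "\<forall>w\<in>upsilon X. \<exists>T. T \<subseteq> upsilon X \<and> w \<in> T \<and> (\<forall>a\<in>T. \<forall>b\<in>T. up_mult X m a b \<in> T) \<and> cancellative_on T (up_mult X m)"
      using SC unfolding sub_clifford_on_def .
    from bspec[OF this FA]
    obtain T where T: "T \<subseteq> upsilon X" "filt X ?A \<in> T" "\<forall>a\<in>T. \<forall>b\<in>T. up_mult X m a b \<in> T"
      "cancellative_on T (up_mult X m)" by (elim exE conjE) (intro that)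
    have sq: "up_mult X m (filt X ?A) (filt X ?A) = filt X {x, y, z}"
      using filt_mult[OF A1 A1 cl] AA by simp
    have cu: "up_mult X m (filt X ?A) (filt X {x, y, z}) = filt X {x, y, z}"
      using filt_mult[OF A1 A3 cl] AAA by simp
    have sqT: "filt X {x, y, z} \<in> T" using T(2,3) sq by metis
    have "\<And>b c. b \<in> T \<Longrightarrow> c \<in> T \<Longrightarrow> up_mult X m (filt X ?A) b = up_mult X m (filt X ?A) c \<Longrightarrow> b = c"
      using T(4) T(2) unfolding cancellative_on_def by blast
    then have "filt X ?A = filt X {x, y, z}" using T(2) sqT sq cu by metis
    then have "?A = {x, y, z}" using filt_inj A1 A3 by blast
    then show "m x y \<in> {x, y}" using z_def by auto
  next
    assume R: "regular_on (upsilon X) (up_mult X m)"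
    let ?F = "filt X ?A"
    obtain \<S> where Sg: "\<S> \<in> upsilon X" "up_mult X m (up_mult X m ?F \<S>) ?F = ?F"
      using R FA unfolding regular_on_def by blast
    have FS: "up_mult X m ?F \<S> \<in> upsilon X" using up_mult_closed[OF FA Sg(1)] .
    have "?A \<in> ?F" unfolding filt_iff using A1 by simp
    then have "?A \<in> up_mult X m (up_mult X m ?F \<S>) ?F" using Sg(2) by simp
    then have "{u\<in>X. {b\<in>X. m u b \<in> ?A} \<in> ?F} \<in> up_mult X m ?F \<S>"
      using up_mult_char[OF FS FA] by blast
    moreover have "{u\<in>X. {b\<in>X. m u b \<in> ?A} \<in> ?F} = {u\<in>X. \<forall>a\<in>?A. m u a \<in> ?A}"
      using filt_mem[OF A1(1)] by simp
    ultimately have "{u\<in>X. \<forall>a\<in>?A. m u a \<in> ?A} \<in> up_mult X m ?F \<S>" by simp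
    then have "{a\<in>X. {s\<in>X. m a s \<in> {u\<in>X. \<forall>a\<in>?A. m u a \<in> ?A}} \<in> \<S>} \<in> ?F"
      using up_mult_char[OF FA Sg(1)] by blast
    then have "{s\<in>X. m x s \<in> {u\<in>X. \<forall>a\<in>?A. m u a \<in> ?A}} \<in> \<S>"
      using filt_mem[OF A1(1), of "\<lambda>a. {s\<in>X. m a s \<in> {u\<in>X. \<forall>a\<in>?A. m u a \<in> ?A}} \<in> \<S>"] by simp
    then have "{s\<in>X. m x s \<in> {u\<in>X. \<forall>a\<in>?A. m u a \<in> ?A}} \<noteq> {}" using ups_ne[OF Sg(1)] by blast
    then obtain s where sX: "s \<in> X" and s2: "m (m x s) y \<in> ?A" by blast
    define w where "w = m (m x s) y"
    have xs: "m x s \<in> X" using cl x sX by simp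
    have xw: "m x w = w" unfolding w_def using as[OF x x sX] as[OF x xs y] B x by simp
    have yw: "m y w = w"
    proof -
      have "m y w = m (m y (m x s)) y" unfolding w_def using as[OF y xs y] by simp
      also have "\<dots> = m (m (m x s) y) y" using CM y xs by simp
      also have "\<dots> = w" unfolding w_def using as[OF xs y y] B y by simp
      finally show ?thesis .
    qed
    have "w = x \<or> w = y" using s2 w_def by simp
    then show "m x y \<in> {x, y}"
    proof
      assume "w = x" then have "m y x = x" using yw by simp
      then show ?thesis using CM x y by simp
    next
      assume "w = y" then have "m x y = y" using xw by simp
      then show ?thesis by simp
    qed
  qed
qed

lemma dep_seq:
  assumes "y0 \<in> Y" "\<forall>y\<in>Y. \<exists>y'\<in>Y. P y' y"
  shows "\<exists>s. \<forall>n. s n \<in> Y \<and> P (s (Suc n)) (s n)"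
proof -
  define s where "s = rec_nat y0 (\<lambda>_ y. SOME y'. y' \<in> Y \<and> P y' y)"
  have s0: "s 0 = y0" unfolding s_def by simp
  have sS: "\<And>n. s (Suc n) = (SOME y'. y' \<in> Y \<and> P y' (s n))" unfolding s_def by simp
  have sY: "\<And>n. s n \<in> Y"
  proof -
    fix n show "s n \<in> Y"
    proof (induction n)
      case 0 then show ?case using s0 assms(1) by simp
    next
      case (Suc n)
      then have "\<exists>y'. y' \<in> Y \<and> P y' (s n)" using assms(2) by blast
      then have "(SOME y'. y' \<in> Y \<and> P y' (s n)) \<in> Y" by (rule someI2_ex) blast
      then show ?case using sS by simp
    qed
  qed
  have "\<And>n. P (s (Suc n)) (s n)"
  proof -
    fix n
    have "\<exists>y'. y' \<in> Y \<and> P y' (s n)" using assms(2) sY by blast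
    then have "P (SOME y'. y' \<in> Y \<and> P y' (s n)) (s n)" by (rule someI2_ex) blast
    then show "P (s (Suc n)) (s n)" using sS by simp
  qed
  then show ?thesis using sY by blast
qed

lemma sl_finite:
  assumes SL: "semilattice_on X m" and L: "linear_on X m"
    and IC: "idempotents_commute_on (upsilon X) (up_mult X m)"
  shows "finite X"
proof -
  have cl: "\<And>x y. x \<in> X \<Longrightarrow> y \<in> X \<Longrightarrow> m x y \<in> X" and
    as: "\<And>x y z. x \<in> X \<Longrightarrow> y \<in> X \<Longrightarrow> z \<in> X \<Longrightarrow> m (m x y) z = m x (m y z)" and
    cm: "\<And>x y. x \<in> X \<Longrightarrow> y \<in> X \<Longrightarrow> m x y = m y x" and
    id: "\<And>x. x \<in> X \<Longrightarrow> m x x = x"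
    using SL unfolding semilattice_on_def semigroup_on_def by auto
  have lin: "\<And>x y. x \<in> X \<Longrightarrow> y \<in> X \<Longrightarrow> m x y = x \<or> m x y = y" using L unfolding linear_on_def by auto
  show ?thesis
  proof (cases "\<exists>Y. Y \<subseteq> X \<and> Y \<noteq> {} \<and> (\<forall>y\<in>Y. \<exists>y'\<in>Y. y' \<noteq> y \<and> m y' y = y')")
    case True
    then obtain Y y0 where Y: "Y \<subseteq> X" "y0 \<in> Y" "\<forall>y\<in>Y. \<exists>y'\<in>Y. y' \<noteq> y \<and> m y' y = y'" by blast
    obtain s where s: "\<forall>n. s n \<in> Y \<and> (s (Suc n) \<noteq> s n \<and> m (s (Suc n)) (s n) = s (Suc n))"
      using dep_seq[OF Y(2), of "\<lambda>y' y. y' \<noteq> y \<and> m y' y = y'"] Y(3) by blast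
    have sX: "\<And>n. s n \<in> X" using s Y(1) by blast
    have dn: "\<And>i k. m (s (i + k)) (s i) = s (i + k)"
    proof -
      fix i k show "m (s (i + k)) (s i) = s (i + k)"
      proof (induction k)
        case 0 then show ?case using id sX by simp
      next
        case (Suc k)
        have "m (s (i + Suc k)) (s i) = m (m (s (Suc (i + k))) (s (i + k))) (s i)" using s by simp
        also have "\<dots> = m (s (Suc (i + k))) (m (s (i + k)) (s i))" using as sX by simp
        also have "\<dots> = s (i + Suc k)" using Suc s by simp
        finally show ?case .
      qed
    qed
    have mx: "\<And>i j. m (s i) (s j) = s (max i j)"
    proof -
      fix i j show "m (s i) (s j) = s (max i j)"
      proof (cases "i \<le> j")
        case True
        then obtain k where "j = i + k" using le_Suc_ex by blast
        then show ?thesis using dn[of i k] cm[OF sX sX] True by simp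
      next
        case False
        define k where "k = i - j"
        have "i = j + k" using False k_def by simp
        then show ?thesis using dn[of j k] False by simp
      qed
    qed
    have inj: "inj s"
    proof (rule injI)
      fix i j assume eq: "s i = s j"
      show "i = j"
      proof (rule ccontr)
        assume "i \<noteq> j"
        then have "(i < j \<and> s i = s j) \<or> (j < i \<and> s j = s i)" using eq by auto
        then obtain a b where ab: "a < b" "s a = s b" by blast
        define k where "k = b - Suc a"
        have b: "b = Suc a + k" using ab k_def by simp
        have "m (s b) (s (Suc a)) = s b" using dn[of "Suc a" k] b by simp
        then have "m (s a) (s (Suc a)) = s a" using ab by simp
        moreover have "m (s (Suc a)) (s a) = s (Suc a)" using s by blast
        ultimately have "s a = s (Suc a)" using cm[OF sX sX] by simp
        moreover have "s (Suc a) \<noteq> s a" using s by blast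
        ultimately show False by simp
      qed
    qed
    have P1: "\<forall>C n. C \<subseteq> X \<longrightarrow> (finite {k. m (s n) (s k) \<in> C} \<longleftrightarrow> finite {k. s k \<in> C}) \<and>
                (finite (-{k. m (s n) (s k) \<in> C}) \<longleftrightarrow> finite (-{k. s k \<in> C}))"
    proof (intro allI impI)
      fix C n
      have "\<forall>k\<ge>n. (k \<in> {k. m (s n) (s k) \<in> C}) = (k \<in> {k. s k \<in> C})" using mx by simp
      then show "(finite {k. m (s n) (s k) \<in> C} \<longleftrightarrow> finite {k. s k \<in> C}) \<and>
                (finite (-{k. m (s n) (s k) \<in> C}) \<longleftrightarrow> finite (-{k. s k \<in> C}))" by (rule evq_fin)
    qed
    have "\<not> idempotents_commute_on (upsilon X) (up_mult X m)"
      by (rule seq_noIC[OF inj sX]) (rule disjI1[OF P1])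
    then show ?thesis using IC by contradiction
  next
    case noA: False
    show ?thesis
    proof (cases "\<exists>Y. Y \<subseteq> X \<and> Y \<noteq> {} \<and> (\<forall>y\<in>Y. \<exists>y'\<in>Y. y' \<noteq> y \<and> m y y' = y)")
      case True
      then obtain Y y0 where Y: "Y \<subseteq> X" "y0 \<in> Y" "\<forall>y\<in>Y. \<exists>y'\<in>Y. y' \<noteq> y \<and> m y y' = y" by blast
      obtain s where s: "\<forall>n. s n \<in> Y \<and> (s (Suc n) \<noteq> s n \<and> m (s n) (s (Suc n)) = s n)"
        using dep_seq[OF Y(2), of "\<lambda>y' y. y' \<noteq> y \<and> m y y' = y"] Y(3) by blast
      have sX: "\<And>n. s n \<in> X" using s Y(1) by blast
      have up: "\<And>i k. m (s i) (s (i + k)) = s i"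
      proof -
        fix i k show "m (s i) (s (i + k)) = s i"
        proof (induction k)
          case 0 then show ?case using id sX by simp
        next
          case (Suc k)
          have "m (s i) (s (i + Suc k)) = m (m (s i) (s (i + k))) (s (Suc (i + k)))" using Suc by simp
          also have "\<dots> = m (s i) (m (s (i + k)) (s (Suc (i + k))))" using as sX by simp
          also have "\<dots> = s i" using Suc s by simp
          finally show ?case .
        qed
      qed
      have mn: "\<And>i j. m (s i) (s j) = s (min i j)"
      proof -
        fix i j show "m (s i) (s j) = s (min i j)"
        proof (cases "i \<le> j")
          case True
          then obtain k where "j = i + k" using le_Suc_ex by blast
          then show ?thesis using up[of i k] True by simp
        next
          case False
          define k where "k = i - j"
          have "i = j + k" using False k_def by simp
          then show ?thesis using up[of j k] cm[OF sX sX] False by simp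
        qed
      qed
      have inj: "inj s"
      proof (rule injI)
        fix i j assume eq: "s i = s j"
        show "i = j"
        proof (rule ccontr)
          assume "i \<noteq> j"
          then have "(i < j \<and> s i = s j) \<or> (j < i \<and> s j = s i)" using eq by auto
          then obtain a b where ab: "a < b" "s a = s b" by blast
          define k where "k = b - Suc a"
          have b: "b = Suc a + k" using ab k_def by simp
          have "m (s (Suc a)) (s b) = s (Suc a)" using up[of "Suc a" k] b by simp
          then have "m (s (Suc a)) (s a) = s (Suc a)" using ab by simp
          moreover have "m (s a) (s (Suc a)) = s a" using s by blast
          ultimately have "s a = s (Suc a)" using cm[OF sX sX] by simp
          moreover have "s (Suc a) \<noteq> s a" using s by blast
          ultimately show False by simp
        qed
      qed
      have P2: "\<forall>C n. C \<subseteq> X \<longrightarrow> (s n \<in> C \<longrightarrow> finite (-{k. m (s n) (s k) \<in> C})) \<and>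
                (s n \<notin> C \<longrightarrow> finite {k. m (s n) (s k) \<in> C})"
      proof (intro allI impI conjI)
        fix C n
        assume "s n \<in> C"
        then have "-{k. m (s n) (s k) \<in> C} \<subseteq> {..<n}" using mn by (auto simp: not_less min_def split: if_splits)
        then show "finite (-{k. m (s n) (s k) \<in> C})" using finite_subset by blast
      next
        fix C n
        assume "s n \<notin> C"
        then have "{k. m (s n) (s k) \<in> C} \<subseteq> {..<n}" using mn by (auto simp: not_less min_def split: if_splits)
        then show "finite {k. m (s n) (s k) \<in> C}" using finite_subset by blast
      qed
      have "\<not> idempotents_commute_on (upsilon X) (up_mult X m)"
        by (rule seq_noIC[OF inj sX]) (rule disjI2[OF P2])
      then show ?thesis using IC by contradiction
    next
      case noB: False
      have hmin: "\<And>Y. Y \<subseteq> X \<Longrightarrow> Y \<noteq> {} \<Longrightarrow> \<exists>a\<in>Y. \<forall>b\<in>Y. m a b = a"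
      proof -
        fix Y assume Y: "Y \<subseteq> X" "Y \<noteq> {}"
        have "\<not> (\<forall>y\<in>Y. \<exists>y'\<in>Y. y' \<noteq> y \<and> m y' y = y')"
        proof
          assume H: "\<forall>y\<in>Y. \<exists>y'\<in>Y. y' \<noteq> y \<and> m y' y = y'"
          have "\<exists>Y. Y \<subseteq> X \<and> Y \<noteq> {} \<and> (\<forall>y\<in>Y. \<exists>y'\<in>Y. y' \<noteq> y \<and> m y' y = y')"
            using Y H by blast
          then show False using noA by contradiction
        qed
        then obtain a where a: "a \<in> Y" "\<forall>y'\<in>Y. \<not> (y' \<noteq> a \<and> m y' a = y')" by blast
        have "\<forall>b\<in>Y. m a b = a"
        proof
          fix b assume b: "b \<in> Y"
          show "m a b = a"
          proof (cases "m a b = a")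
            case False
            then have "m a b = b" using lin Y a b by blast
            moreover have "a \<in> X" "b \<in> X" using Y a b by auto
            ultimately have "m b a = b" using cm by simp
            then have "b = a" using a b by blast
            then show ?thesis using id Y a by blast
          qed
        qed
        then show "\<exists>a\<in>Y. \<forall>b\<in>Y. m a b = a" using a by blast
      qed
      have hmax: "\<And>Y. Y \<subseteq> X \<Longrightarrow> Y \<noteq> {} \<Longrightarrow> \<exists>a\<in>Y. \<forall>b\<in>Y. m b a = b"
      proof -
        fix Y assume Y: "Y \<subseteq> X" "Y \<noteq> {}"
        have "\<not> (\<forall>y\<in>Y. \<exists>y'\<in>Y. y' \<noteq> y \<and> m y y' = y)"
        proof
          assume H: "\<forall>y\<in>Y. \<exists>y'\<in>Y. y' \<noteq> y \<and> m y y' = y"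
          have "\<exists>Y. Y \<subseteq> X \<and> Y \<noteq> {} \<and> (\<forall>y\<in>Y. \<exists>y'\<in>Y. y' \<noteq> y \<and> m y y' = y)"
            using Y H by blast
          then show False using noB by contradiction
        qed
        then obtain a where a: "a \<in> Y" "\<forall>y'\<in>Y. \<not> (y' \<noteq> a \<and> m a y' = a)" by blast
        have "\<forall>b\<in>Y. m b a = b"
        proof
          fix b assume b: "b \<in> Y"
          show "m b a = b"
          proof (cases "m b a = b")
            case False
            then have "m b a = a" using lin Y a b by blast
            moreover have "a \<in> X" "b \<in> X" using Y a b by auto
            ultimately have "m a b = a" using cm by simp
            then have "b = a" using a b by blast
            then show ?thesis using id Y a by blast
          qed
        qed
        then show "\<exists>a\<in>Y. \<forall>b\<in>Y. m b a = b" using a by blast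
      qed
      show "finite X"
      proof (rule ccontr)
        assume inf: "infinite X"
        define A' where "A' = {a\<in>X. infinite {b\<in>X. m a b = a}}"
        have "X \<noteq> {}" using inf by auto
        then obtain a0 where a0: "a0 \<in> X" "\<forall>b\<in>X. m a0 b = a0" using hmin[of X] by blast
        have "{b\<in>X. m a0 b = a0} = X" using a0 by blast
        then have "a0 \<in> A'" unfolding A'_def using a0 inf by simp
        then have "A' \<subseteq> X" "A' \<noteq> {}" unfolding A'_def by auto
        then obtain c where c: "c \<in> A'" "\<forall>b\<in>A'. m b c = b" using hmax by blast
        have cX: "c \<in> X" using c unfolding A'_def by blast
        define S where "S = {b\<in>X. m c b = c} - {c}"
        have "infinite {b\<in>X. m c b = c}" using c unfolding A'_def by blast
        then have Sinf: "infinite S" unfolding S_def by simp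
        have "S \<subseteq> X" unfolding S_def by auto
        moreover have "S \<noteq> {}" using Sinf by auto
        ultimately obtain d where d: "d \<in> S" "\<forall>b\<in>S. m d b = d" using hmin by blast
        have dX: "d \<in> X" using d unfolding S_def by blast
        have "S \<subseteq> {b\<in>X. m d b = d}" using d unfolding S_def by blast
        then have "infinite {b\<in>X. m d b = d}" using Sinf finite_subset by blast
        then have "d \<in> A'" unfolding A'_def using dX by blast
        then have "m d c = d" using c by blast
        moreover have "m c d = c" "d \<noteq> c" using d unfolding S_def by auto
        ultimately show False using cm[OF cX dX] by simp
      qed
    qed
  qed
qed

lemma sl_iso:
  assumes fin: "finite X" and SL: "semilattice_on X m" and L: "linear_on X m"
  shows "\<exists>n. iso_to_L X m n"
proof -
  have cl: "\<And>x y. x \<in> X \<Longrightarrow> y \<in> X \<Longrightarrow> m x y \<in> X" and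
    as: "\<And>x y z. x \<in> X \<Longrightarrow> y \<in> X \<Longrightarrow> z \<in> X \<Longrightarrow> m (m x y) z = m x (m y z)" and
    cm: "\<And>x y. x \<in> X \<Longrightarrow> y \<in> X \<Longrightarrow> m x y = m y x" and
    id: "\<And>x. x \<in> X \<Longrightarrow> m x x = x"
    using SL unfolding semilattice_on_def semigroup_on_def by auto
  have lin: "\<And>x y. x \<in> X \<Longrightarrow> y \<in> X \<Longrightarrow> m x y = x \<or> m x y = y" using L unfolding linear_on_def by auto
  define Bl where "Bl = (\<lambda>x. {y\<in>X. m y x = y \<and> y \<noteq> x})"
  define h where "h = (\<lambda>x. card (Bl x))"
  have Blfin: "\<And>x. finite (Bl x)" unfolding Bl_def using fin by simp
  have sub: "Bl x \<subseteq> Bl x'" if x: "x \<in> X" "x' \<in> X" "m x x' = x" for x x'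
  proof
    fix y assume "y \<in> Bl x"
    then have y: "y \<in> X" "m y x = y" "y \<noteq> x" unfolding Bl_def by auto
    have "m y x' = m (m y x) x'" by (simp only: y(2))
    also have "\<dots> = m y (m x x')" by (rule as[OF y(1) x(1) x(2)])
    also have "\<dots> = y" by (simp only: x(3) y(2))
    finally have yx': "m y x' = y" .
    have "y \<noteq> x'"
    proof
      assume "y = x'"
      then have "m x' x = x'" using y by simp
      then have "x = x'" using cm[OF x(1) x(2)] x(3) by simp
      then show False using y \<open>y = x'\<close> by simp
    qed
    then show "y \<in> Bl x'" unfolding Bl_def using y yx' by simp
  qed
  have hle: "h x \<le> h x'" if "x \<in> X" "x' \<in> X" "m x x' = x" for x x'
    unfolding h_def using card_mono[OF Blfin sub[OF that]] .
  have hlt: "h x < h x'" if x: "x \<in> X" "x' \<in> X" "m x x' = x" "x \<noteq> x'" for x x'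
  proof -
    have "x \<in> Bl x'" unfolding Bl_def using x by simp
    moreover have "x \<notin> Bl x" unfolding Bl_def by simp
    ultimately have "Bl x \<subset> Bl x'" using sub[OF x(1-3)] by blast
    then show ?thesis unfolding h_def by (rule psubset_card_mono[OF Blfin])
  qed
  have hom: "h (m x y) = min (h x) (h y)" if x: "x \<in> X" and y: "y \<in> X" for x y
  proof (cases "m x y = x")
    case True then show ?thesis using hle[OF x y True] by simp
  next
    case False
    then have "m x y = y" using lin x y by blast
    moreover then have "m y x = y" using cm[OF x y] by simp
    ultimately show ?thesis using hle[OF y x] by simp
  qed
  have inj: "inj_on h X"
  proof (rule inj_onI)
    fix x y assume x: "x \<in> X" and y: "y \<in> X" and eq: "h x = h y"
    show "x = y"
    proof (rule ccontr)
      assume ne: "x \<noteq> y"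
      show False
      proof (cases "m x y = x")
        case True then show False using hlt[OF x y True ne] eq by simp
      next
        case False
        then have "m x y = y" using lin x y by blast
        then have "m y x = y" using cm[OF x y] by simp
        then show False using hlt[OF y x _ ] ne eq by simp
      qed
    qed
  qed
  have rng: "h ` X \<subseteq> {..<card X}"
  proof
    fix z assume "z \<in> h ` X"
    then obtain x where x: "x \<in> X" "z = h x" by blast
    have "Bl x \<subseteq> X - {x}" unfolding Bl_def by auto
    then have "h x \<le> card (X - {x})" unfolding h_def by (rule card_mono[OF finite_Diff[OF fin]])
    also have "\<dots> < card X" by (rule card_Diff1_less[OF fin x(1)])
    finally show "z \<in> {..<card X}" using x by simp
  qed
  have "card (h ` X) = card {..<card X}" using card_image[OF inj] by simp
  then have "h ` X = {..<card X}" using card_subset_eq[OF _ rng] by simp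
  then have "bij_betw h X {..<card X}" using inj unfolding bij_betw_def by simp
  then show ?thesis unfolding iso_to_L_def using hom by blast
qed

lemma fin_min:
  assumes SL: "semilattice_on X m" and L: "linear_on X m"
  shows "finite Y \<Longrightarrow> Y \<noteq> {} \<Longrightarrow> Y \<subseteq> X \<Longrightarrow> \<exists>a\<in>Y. \<forall>b\<in>Y. m a b = a"
proof (induction Y rule: finite_ne_induct)
  have as: "\<And>x y z. x \<in> X \<Longrightarrow> y \<in> X \<Longrightarrow> z \<in> X \<Longrightarrow> m (m x y) z = m x (m y z)" and
    cm: "\<And>x y. x \<in> X \<Longrightarrow> y \<in> X \<Longrightarrow> m x y = m y x" and
    id: "\<And>x. x \<in> X \<Longrightarrow> m x x = x"
    using SL unfolding semilattice_on_def semigroup_on_def by auto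
  have lin: "\<And>x y. x \<in> X \<Longrightarrow> y \<in> X \<Longrightarrow> m x y = x \<or> m x y = y" using L unfolding linear_on_def by auto
  {
    case (singleton x) then show ?case using id by simp
  next
    case (insert x F)
    then obtain a where a: "a \<in> F" "\<forall>b\<in>F. m a b = a" by auto
    have xX: "x \<in> X" and aX: "a \<in> X" using insert a by auto
    show ?case
    proof (cases "m x a = x")
      case True
      have "\<forall>b\<in>insert x F. m x b = x"
      proof
        fix b assume b: "b \<in> insert x F"
        show "m x b = x"
        proof (cases "b = x")
          case True then show ?thesis using id xX by simp
        next
          case False
          then have bF: "b \<in> F" using b by simp
          then have bX: "b \<in> X" using insert by auto
          have "m x b = m (m x a) b" using True by simp
          also have "\<dots> = m x (m a b)" using as xX aX bX by simp
          also have "\<dots> = x" using a bF True by simp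
          finally show ?thesis .
        qed
      qed
      then show ?thesis by blast
    next
      case False
      then have "m x a = a" using lin xX aX by blast
      then have "m a x = a" using cm xX aX by simp
      then show ?thesis using a by blast
    qed
  }
qed

lemma fin_max:
  assumes SL: "semilattice_on X m" and L: "linear_on X m"
  shows "finite Y \<Longrightarrow> Y \<noteq> {} \<Longrightarrow> Y \<subseteq> X \<Longrightarrow> \<exists>a\<in>Y. \<forall>b\<in>Y. m b a = b"
proof (induction Y rule: finite_ne_induct)
  have as: "\<And>x y z. x \<in> X \<Longrightarrow> y \<in> X \<Longrightarrow> z \<in> X \<Longrightarrow> m (m x y) z = m x (m y z)" and
    cm: "\<And>x y. x \<in> X \<Longrightarrow> y \<in> X \<Longrightarrow> m x y = m y x" and
    id: "\<And>x. x \<in> X \<Longrightarrow> m x x = x"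
    using SL unfolding semilattice_on_def semigroup_on_def by auto
  have lin: "\<And>x y. x \<in> X \<Longrightarrow> y \<in> X \<Longrightarrow> m x y = x \<or> m x y = y" using L unfolding linear_on_def by auto
  {
    case (singleton x) then show ?case using id by simp
  next
    case (insert x F)
    then obtain a where a: "a \<in> F" "\<forall>b\<in>F. m b a = b" by auto
    have xX: "x \<in> X" and aX: "a \<in> X" using insert a by auto
    show ?case
    proof (cases "m a x = a")
      case True
      have "\<forall>b\<in>insert x F. m b x = b"
      proof
        fix b assume b: "b \<in> insert x F"
        show "m b x = b"
        proof (cases "b = x")
          case True then show ?thesis using id xX by simp
        next
          case False
          then have bF: "b \<in> F" using b by simp
          then have bX: "b \<in> X" using insert by auto
          have "m b x = m (m b a) x" using a bF by simp
          also have "\<dots> = m b (m a x)" using as xX aX bX by simp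
          also have "\<dots> = b" using a bF True by simp
          finally show ?thesis .
        qed
      qed
      then show ?thesis by blast
    next
      case False
      then have "m a x = x" using lin xX aX by blast
      then have "m x a = x" using cm xX aX by simp
      then show ?thesis using a by blast
    qed
  }
qed

lemma chain_idem:
  assumes L: "linear_on X m" and A: "\<A> \<in> upsilon X"
  shows "up_mult X m \<A> \<A> = \<A>"
proof (rule set_eqI)
  fix C
  have lin: "\<And>x y. x \<in> X \<Longrightarrow> y \<in> X \<Longrightarrow> m x y = x \<or> m x y = y" using L unfolding linear_on_def by auto
  show "C \<in> up_mult X m \<A> \<A> \<longleftrightarrow> C \<in> \<A>"
  proof
    assume "C \<in> up_mult X m \<A> \<A>"
    then have CX: "C \<subseteq> X" and D: "{a\<in>X. {b\<in>X. m a b \<in> C} \<in> \<A>} \<in> \<A>" using up_mult_char[OF A A] by auto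
    show "C \<in> \<A>"
    proof (cases "{a\<in>X. {b\<in>X. m a b \<in> C} \<in> \<A>} \<subseteq> C")
      case True show ?thesis using ups_up[OF A D True CX] by blast
    next
      case False
      then obtain a where a: "a \<in> X" "{b\<in>X. m a b \<in> C} \<in> \<A>" "a \<notin> C" by blast
      have "{b\<in>X. m a b \<in> C} \<subseteq> C"
      proof
        fix b assume b: "b \<in> {b\<in>X. m a b \<in> C}"
        then have "m a b = a \<or> m a b = b" using lin a by blast
        then show "b \<in> C" using a b by auto
      qed
      then show ?thesis using ups_up[OF A a(2) _ CX] by blast
    qed
  next
    assume C: "C \<in> \<A>"
    have CX: "C \<subseteq> X" using ups_sub[OF A C] .
    have "C \<subseteq> {a\<in>X. {b\<in>X. m a b \<in> C} \<in> \<A>}"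
    proof
      fix a assume a: "a \<in> C"
      have "C \<subseteq> {b\<in>X. m a b \<in> C}"
      proof
        fix b assume b: "b \<in> C"
        then have "m a b = a \<or> m a b = b" using lin a CX by blast
        then show "b \<in> {b\<in>X. m a b \<in> C}" using a b CX by auto
      qed
      then have "{b\<in>X. m a b \<in> C} \<in> \<A>" using ups_up[OF A C] by blast
      then show "a \<in> {a\<in>X. {b\<in>X. m a b \<in> C} \<in> \<A>}" using a CX by blast
    qed
    then have "{a\<in>X. {b\<in>X. m a b \<in> C} \<in> \<A>} \<in> \<A>" using ups_up[OF A C] by blast
    then show "C \<in> up_mult X m \<A> \<A>" using up_mult_char[OF A A] CX by blast
  qed
qed

lemma chain_char:
  assumes fin: "finite X" and SL: "semilattice_on X m" and L: "linear_on X m"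
    and A: "\<A> \<in> upsilon X" and B: "\<B> \<in> upsilon X"
  shows "C \<in> up_mult X m \<A> \<B> \<longleftrightarrow> C \<subseteq> X \<and> (\<exists>A0\<in>\<A>. \<exists>B0\<in>\<B>. \<forall>a\<in>A0. \<forall>b\<in>B0. m a b \<in> C)"
proof -
  have as: "\<And>x y z. x \<in> X \<Longrightarrow> y \<in> X \<Longrightarrow> z \<in> X \<Longrightarrow> m (m x y) z = m x (m y z)" and
    cm: "\<And>x y. x \<in> X \<Longrightarrow> y \<in> X \<Longrightarrow> m x y = m y x" and
    id: "\<And>x. x \<in> X \<Longrightarrow> m x x = x"
    using SL unfolding semilattice_on_def semigroup_on_def by auto
  have lin: "\<And>x y. x \<in> X \<Longrightarrow> y \<in> X \<Longrightarrow> m x y = x \<or> m x y = y" using L unfolding linear_on_def by auto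
  define D where "D = {a\<in>X. {b\<in>X. m a b \<in> C} \<in> \<B>}"
  have DX: "D \<subseteq> X" unfolding D_def by blast
  show ?thesis
  proof
    assume "C \<in> up_mult X m \<A> \<B>"
    then have CX: "C \<subseteq> X" and DA: "D \<in> \<A>" using up_mult_char[OF A B] unfolding D_def by auto
    show "C \<subseteq> X \<and> (\<exists>A0\<in>\<A>. \<exists>B0\<in>\<B>. \<forall>a\<in>A0. \<forall>b\<in>B0. m a b \<in> C)"
    proof (cases "D \<subseteq> C")
      case False
      have "finite (D - C)" "D - C \<noteq> {}" "D - C \<subseteq> X" using False fin DX finite_subset by auto
      then obtain a0 where a0: "a0 \<in> D - C" "\<forall>b\<in>D - C. m a0 b = a0" using fin_min[OF SL L] by blast
      have a0X: "a0 \<in> X" using a0 DX by blast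
      define B0 where "B0 = {b\<in>X. m a0 b \<in> C}"
      have B0B: "B0 \<in> \<B>" using a0 unfolding B0_def D_def by blast
      have "\<forall>a\<in>D. \<forall>b\<in>B0. m a b \<in> C"
      proof (intro ballI)
        fix a b assume a: "a \<in> D" and b: "b \<in> B0"
        have aX: "a \<in> X" using a DX by blast
        have bX: "b \<in> X" and a0b: "m a0 b \<in> C" using b unfolding B0_def by auto
        have "m a0 b = a0 \<or> m a0 b = b" using lin a0X bX by blast
        then have a0b': "m a0 b = b" and bC: "b \<in> C" using a0b a0 by auto
        have "m a b = a \<or> m a b = b" using lin aX bX by blast
        then show "m a b \<in> C"
        proof
          assume ab: "m a b = a"
          show "m a b \<in> C"
          proof (rule ccontr)
            assume "m a b \<notin> C"
            then have "a \<in> D - C" using ab a by simp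
            then have "m a0 a = a0" using a0 by blast
            then have "m a0 b = m (m a0 a) b" by simp
            also have "\<dots> = m a0 (m a b)" using as a0X aX bX by simp
            also have "\<dots> = a0" using ab \<open>m a0 a = a0\<close> by simp
            finally have "b = a0" using a0b' by simp
            then show False using bC a0 by simp
          qed
        next
          assume "m a b = b" then show "m a b \<in> C" using bC by simp
        qed
      qed
      then show ?thesis using CX DA B0B by blast
    next
      case True
      have "finite D" "D \<noteq> {}" using fin DX finite_subset ups_ne[OF A DA] by auto
      then obtain a0 where a0: "a0 \<in> D" "\<forall>b\<in>D. m b a0 = b" using fin_max[OF SL L _ _ DX] by blast
      have a0X: "a0 \<in> X" using a0 DX by blast
      define B0 where "B0 = {b\<in>X. m a0 b \<in> C}"
      have B0B: "B0 \<in> \<B>" using a0 unfolding B0_def D_def by blast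
      have "\<forall>a\<in>D. \<forall>b\<in>B0. m a b \<in> C"
      proof (intro ballI)
        fix a b assume a: "a \<in> D" and b: "b \<in> B0"
        have aX: "a \<in> X" using a DX by blast
        have bX: "b \<in> X" and a0b: "m a0 b \<in> C" using b unfolding B0_def by auto
        have "m a b = a \<or> m a b = b" using lin aX bX by blast
        then show "m a b \<in> C"
        proof
          assume "m a b = a" then show "m a b \<in> C" using a True by auto
        next
          assume ab: "m a b = b"
          have aa0: "m a0 a = a" using a0 a cm a0X aX by metis
          have "m a0 b = m a0 (m a b)" using ab by simp
          also have "\<dots> = m (m a0 a) b" using as a0X aX bX by simp
          also have "\<dots> = b" using aa0 ab by simp
          finally show "m a b \<in> C" using a0b ab by simp
        qed
      qed
      then show ?thesis using CX DA B0B by blast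
    qed
  next
    assume H: "C \<subseteq> X \<and> (\<exists>A0\<in>\<A>. \<exists>B0\<in>\<B>. \<forall>a\<in>A0. \<forall>b\<in>B0. m a b \<in> C)"
    then obtain A0 B0 where A0: "A0 \<in> \<A>" and B0: "B0 \<in> \<B>" and AB: "\<forall>a\<in>A0. \<forall>b\<in>B0. m a b \<in> C" by blast
    have "A0 \<subseteq> D"
    proof
      fix a assume a: "a \<in> A0"
      have "B0 \<subseteq> {b\<in>X. m a b \<in> C}" using AB a ups_sub[OF B B0] by blast
      then have "{b\<in>X. m a b \<in> C} \<in> \<B>" using ups_up[OF B B0] by blast
      then show "a \<in> D" unfolding D_def using a ups_sub[OF A A0] by blast
    qed
    then have "D \<in> \<A>" using ups_up[OF A A0 _ DX] by blast
    then show "C \<in> up_mult X m \<A> \<B>" using up_mult_char[OF A B] H unfolding D_def by blast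
  qed
qed

lemma four_to_one:
  assumes S: "semigroup_on X m" and fin: "finite X" and SL: "semilattice_on X m" and L: "linear_on X m"
  shows "finite (upsilon X) \<and> semilattice_on (upsilon X) (up_mult X m)"
proof -
  have cm: "\<And>x y. x \<in> X \<Longrightarrow> y \<in> X \<Longrightarrow> m x y = m y x"
    using SL unfolding semilattice_on_def by auto
  have "upsilon X \<subseteq> Pow (Pow X)" using ups_sub by blast
  then have f: "finite (upsilon X)" using fin finite_subset by blast
  have comm: "up_mult X m \<A> \<B> = up_mult X m \<B> \<A>" if A: "\<A> \<in> upsilon X" and B: "\<B> \<in> upsilon X" for \<A> \<B>
  proof (rule set_eqI)
    fix C
    have "(\<exists>A0\<in>\<A>. \<exists>B0\<in>\<B>. \<forall>a\<in>A0. \<forall>b\<in>B0. m a b \<in> C) \<longleftrightarrow> (\<exists>B0\<in>\<B>. \<exists>A0\<in>\<A>. \<forall>a\<in>B0. \<forall>b\<in>A0. m a b \<in> C)"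
    proof
      assume "\<exists>A0\<in>\<A>. \<exists>B0\<in>\<B>. \<forall>a\<in>A0. \<forall>b\<in>B0. m a b \<in> C"
      then obtain A0 B0 where h: "A0 \<in> \<A>" "B0 \<in> \<B>" "\<forall>a\<in>A0. \<forall>b\<in>B0. m a b \<in> C" by blast
      have "\<forall>a\<in>B0. \<forall>b\<in>A0. m a b \<in> C" using h cm ups_sub[OF A h(1)] ups_sub[OF B h(2)] by (metis subsetD)
      then show "\<exists>B0\<in>\<B>. \<exists>A0\<in>\<A>. \<forall>a\<in>B0. \<forall>b\<in>A0. m a b \<in> C" using h by blast
    next
      assume "\<exists>B0\<in>\<B>. \<exists>A0\<in>\<A>. \<forall>a\<in>B0. \<forall>b\<in>A0. m a b \<in> C"
      then obtain A0 B0 where h: "A0 \<in> \<A>" "B0 \<in> \<B>" "\<forall>a\<in>B0. \<forall>b\<in>A0. m a b \<in> C" by blast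
      have "\<forall>a\<in>A0. \<forall>b\<in>B0. m a b \<in> C" using h cm ups_sub[OF A h(1)] ups_sub[OF B h(2)] by (metis subsetD)
      then show "\<exists>A0\<in>\<A>. \<exists>B0\<in>\<B>. \<forall>a\<in>A0. \<forall>b\<in>B0. m a b \<in> C" using h by blast
    qed
    then show "C \<in> up_mult X m \<A> \<B> \<longleftrightarrow> C \<in> up_mult X m \<B> \<A>"
      unfolding chain_char[OF fin SL L A B] chain_char[OF fin SL L B A] by simp
  qed
  have "semilattice_on (upsilon X) (up_mult X m)"
    unfolding semilattice_on_def using ups_semigroup[OF S] comm chain_idem[OF L] by blast
  then show ?thesis using f by simp
qed

lemma three_to_four:
  assumes S: "semigroup_on X m" and IC: "idempotents_commute_on (upsilon X) (up_mult X m)"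
    and SR: "sub_clifford_on (upsilon X) (up_mult X m) \<or> regular_on (upsilon X) (up_mult X m)"
  shows "finite X \<and> semilattice_on X m \<and> linear_on X m \<and> (\<exists>n. iso_to_L X m n)"
proof -
  have R: "\<forall>x\<in>X. \<exists>s\<in>X. m (m x s) x = x"
    using SR sc_regular[OF S IC] reg_from_ups by blast
  have B: "\<forall>x\<in>X. m x x = x" using reg_band[OF S IC R] .
  have CM: "\<forall>x\<in>X. \<forall>y\<in>X. m x y = m y x" using band_comm[OF S IC B] .
  have SL: "semilattice_on X m" unfolding semilattice_on_def using S B CM by blast
  have L: "linear_on X m" using sl_linear[OF S SR B CM] .
  have fin: "finite X" using sl_finite[OF SL L IC] .
  show ?thesis using fin SL L sl_iso[OF fin SL L] by blast
qed

theorem theorem1p4: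
  fixes X :: "'a set" and m :: "'a \<Rightarrow> 'a \<Rightarrow> 'a"
  assumes "semigroup_on X m"
  shows "((finite (upsilon X) \<and> semilattice_on (upsilon X) (up_mult X m))
           \<longleftrightarrow> inverse_semigroup_on (upsilon X) (up_mult X m))
       \<and> (inverse_semigroup_on (upsilon X) (up_mult X m)
           \<longleftrightarrow> (idempotents_commute_on (upsilon X) (up_mult X m) \<and>
                (sub_clifford_on (upsilon X) (up_mult X m) \<or> regular_on (upsilon X) (up_mult X m))))
       \<and> ((idempotents_commute_on (upsilon X) (up_mult X m) \<and>
                (sub_clifford_on (upsilon X) (up_mult X m) \<or> regular_on (upsilon X) (up_mult X m)))
           \<longleftrightarrow> (finite X \<and> semilattice_on X m \<and> linear_on X m \<and> (\<exists>n. iso_to_L X m n)))"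
proof -
  let ?P1 = "finite (upsilon X) \<and> semilattice_on (upsilon X) (up_mult X m)"
  let ?P2 = "inverse_semigroup_on (upsilon X) (up_mult X m)"
  let ?P3 = "idempotents_commute_on (upsilon X) (up_mult X m) \<and>
                (sub_clifford_on (upsilon X) (up_mult X m) \<or> regular_on (upsilon X) (up_mult X m))"
  let ?P4 = "finite X \<and> semilattice_on X m \<and> linear_on X m \<and> (\<exists>n. iso_to_L X m n)"
  have 12: "?P1 \<Longrightarrow> ?P2" using sl_inverse by blast
  have 23: "?P2 \<Longrightarrow> ?P3" using inverse_IC inverse_regular by blast
  have 34: "?P3 \<Longrightarrow> ?P4" using three_to_four[OF assms] by blast
  have 41: "?P4 \<Longrightarrow> ?P1" using four_to_one[OF assms] by blast
  show ?thesis using 12 23 34 41 by blast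
qed

end
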